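(* Let $p$ be a prime and let $\Gamma$ be a finite connected $G$-arc-transitive graph of prime valency $p$, with $G\leqslant\mathrm{Aut}(\Gamma)$ acting quasiprimitively or biquasiprimitively on $\mathrm V(\Gamma)$. Suppose that either (a) $\Gamma=\mathrm K_{12}$, $G=\mathrm M_{11}$ and $p=11$; or (b) $|\mathrm V(\Gamma)|=(p^2-1)/2s$ and $G=\mathrm{PSL}_2(p)$ or $\mathrm{PGL}_2(p)$, where $p$ is a Mersenne prime and $\mathrm C_r\leqslant \mathrm C_s<\mathrm C_{(p-1)/2}$, with $r$ the product of the distinct prime divisors of $(p-1)/2$. Then $\Gamma$ contains a triangle.
   Context: A graph is $G$-arc-transitive if $G$ acts transitively on its arcs. A permutation group is quasiprimitive if every nontrivial normal subgroup is transitive, and biquasiprimitive if it is not quasiprimitive and every nontrivial normal subgroup has at most two orbits. $\mathrm C_n$ denotes the cyclic group of order $n$. A triangle is a set of three pairwise adjacent vertices. *)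

theory Defs
  imports "HOL-Algebra.Bij" "HOL-Algebra.Coset" "HOL-Algebra.Generated_Groups"
          "HOL-Computational_Algebra.Primes" "HOL-Number_Theory.Cong"
begin

definition simple_graph :: "'v set \<Rightarrow> ('v \<Rightarrow> 'v \<Rightarrow> bool) \<Rightarrow> bool" where
  "simple_graph V E \<longleftrightarrow> finite V \<and> (\<forall>x y. E x y \<longrightarrow> x \<in> V \<and> y \<in> V)
     \<and> (\<forall>x y. E x y \<longrightarrow> E y x) \<and> (\<forall>x. \<not> E x x)"

definition graph_connected :: "'v set \<Rightarrow> ('v \<Rightarrow> 'v \<Rightarrow> bool) \<Rightarrow> bool" where
  "graph_connected V E \<longleftrightarrow>
     (\<forall>u\<in>V. \<forall>v\<in>V. (u, v) \<in> {(x, y). x \<in> V \<and> y \<in> V \<and> E x y}\<^sup>*)"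

definition valency :: "'v set \<Rightarrow> ('v \<Rightarrow> 'v \<Rightarrow> bool) \<Rightarrow> nat \<Rightarrow> bool" where
  "valency V E k \<longleftrightarrow> (\<forall>v\<in>V. card {u \<in> V. E v u} = k)"

definition arcs :: "'v set \<Rightarrow> ('v \<Rightarrow> 'v \<Rightarrow> bool) \<Rightarrow> ('v \<times> 'v) set" where
  "arcs V E = {(u, v). u \<in> V \<and> v \<in> V \<and> E u v}"

definition graph_aut :: "'v set \<Rightarrow> ('v \<Rightarrow> 'v \<Rightarrow> bool) \<Rightarrow> ('v \<Rightarrow> 'v) set" where
  "graph_aut V E = {g \<in> Bij V. \<forall>x\<in>V. \<forall>y\<in>V. E x y \<longleftrightarrow> E (g x) (g y)}"

definition arc_transitive :: "'v set \<Rightarrow> ('v \<Rightarrow> 'v \<Rightarrow> bool) \<Rightarrow> ('v \<Rightarrow> 'v) set \<Rightarrow> bool" where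
  "arc_transitive V E G \<longleftrightarrow>
     (\<forall>a\<in>arcs V E. \<forall>b\<in>arcs V E. \<exists>g\<in>G. g (fst a) = fst b \<and> g (snd a) = snd b)"

definition is_complete_graph :: "'v set \<Rightarrow> ('v \<Rightarrow> 'v \<Rightarrow> bool) \<Rightarrow> nat \<Rightarrow> bool" where
  "is_complete_graph V E n \<longleftrightarrow> card V = n \<and> (\<forall>x\<in>V. \<forall>y\<in>V. x \<noteq> y \<longrightarrow> E x y)"

definition has_triangle :: "'v set \<Rightarrow> ('v \<Rightarrow> 'v \<Rightarrow> bool) \<Rightarrow> bool" where
  "has_triangle V E \<longleftrightarrow> (\<exists>x\<in>V. \<exists>y\<in>V. \<exists>z\<in>V. x \<noteq> y \<and> y \<noteq> z \<and> x \<noteq> z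
      \<and> E x y \<and> E y z \<and> E x z)"

definition perm_group :: "'v set \<Rightarrow> ('v \<Rightarrow> 'v) set \<Rightarrow> ('v \<Rightarrow> 'v) monoid" where
  "perm_group V G = (BijGroup V)\<lparr>carrier := G\<rparr>"

definition perm_orbits :: "'v set \<Rightarrow> ('v \<Rightarrow> 'v) set \<Rightarrow> 'v set set" where
  "perm_orbits V N = {(\<lambda>g. g x) ` N | x. x \<in> V}"

definition quasiprimitive :: "'v set \<Rightarrow> ('v \<Rightarrow> 'v) set \<Rightarrow> bool" where
  "quasiprimitive V G \<longleftrightarrow>
     (\<forall>N. N \<lhd> perm_group V G \<and> N \<noteq> {\<one>\<^bsub>perm_group V G\<^esub>}
        \<longrightarrow> (\<forall>x\<in>V. \<forall>y\<in>V. \<exists>g\<in>N. g x = y))"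

definition biquasiprimitive :: "'v set \<Rightarrow> ('v \<Rightarrow> 'v) set \<Rightarrow> bool" where
  "biquasiprimitive V G \<longleftrightarrow> \<not> quasiprimitive V G \<and>
     (\<forall>N. N \<lhd> perm_group V G \<and> N \<noteq> {\<one>\<^bsub>perm_group V G\<^esub>}
        \<longrightarrow> card (perm_orbits V N) \<le> 2)"

text \<open>M11 as the subgroup of Sym({0..10}) generated by (1,...,11) and (3,7,11,8)(4,10,5,6)
  (written 1-based; here shifted to points 0..10).\<close>
definition m11_a :: "nat \<Rightarrow> nat" where
  "m11_a = (\<lambda>i\<in>{0..<11}. (i + 1) mod 11)"

definition m11_b :: "nat \<Rightarrow> nat" where
  "m11_b = (\<lambda>i\<in>{0..<11}. if i = 2 then 6 else if i = 6 then 10 else if i = 10 then 7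
      else if i = 7 then 2 else if i = 3 then 9 else if i = 9 then 4 else if i = 4 then 5
      else if i = 5 then 3 else i)"

definition M11 :: "(nat \<Rightarrow> nat) monoid" where
  "M11 = perm_group {0..<11} (generate (BijGroup {0..<11}) {m11_a, m11_b})"

text \<open>Projective line over GF(p): points 0..p-1 are the field elements x (homogeneous
  coordinates (x,1)), point p is infinity (coordinates (1,0)).\<close>
definition hcoord :: "nat \<Rightarrow> nat \<Rightarrow> int \<times> int" where
  "hcoord p x = (if x = p then (1, 0) else (int x, 1))"

text \<open>sigma is the Moebius transformation induced by the matrix [[a,b],[c,d]].\<close>
definition moebius_perm :: "nat \<Rightarrow> int \<Rightarrow> int \<Rightarrow> int \<Rightarrow> int \<Rightarrow> (nat \<Rightarrow> nat) \<Rightarrow> bool" where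
  "moebius_perm p a b c d \<sigma> \<longleftrightarrow>
     (\<forall>x\<in>{0..p}. [(a * fst (hcoord p x) + b * snd (hcoord p x)) * snd (hcoord p (\<sigma> x))
                 = (c * fst (hcoord p x) + d * snd (hcoord p x)) * fst (hcoord p (\<sigma> x))] (mod int p))"

definition PGL2 :: "nat \<Rightarrow> (nat \<Rightarrow> nat) monoid" where
  "PGL2 p = perm_group {0..p}
     {\<sigma> \<in> Bij {0..p}. \<exists>a b c d. \<not> [a * d - b * c = 0] (mod int p) \<and> moebius_perm p a b c d \<sigma>}"

text \<open>PSL2(p): image of SL2(p), i.e. the Moebius maps whose matrix has determinant 1
  (equivalently, up to scalars, a nonzero square determinant).\<close>
definition PSL2 :: "nat \<Rightarrow> (nat \<Rightarrow> nat) monoid" where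
  "PSL2 p = perm_group {0..p}
     {\<sigma> \<in> Bij {0..p}. \<exists>a b c d. [a * d - b * c = 1] (mod int p) \<and> moebius_perm p a b c d \<sigma>}"

definition mersenne_prime :: "nat \<Rightarrow> bool" where
  "mersenne_prime p \<longleftrightarrow> prime p \<and> (\<exists>k. p = 2 ^ k - 1)"

end

theory Submission
  imports Defs "HOL-Number_Theory.Modular_Inverse" "HOL-Number_Theory.Euler_Criterion"
    "HOL-Algebra.Group_Action" "HOL-Algebra.Sylow"
begin
type_synonym mat = "int \<times> int \<times> int \<times> int"

lemma primeI_int: "prime p \<Longrightarrow> prime (int p)"
  by simp

lemma pdvd_mult: "prime p \<Longrightarrow> int p dvd (x * y) \<Longrightarrow> int p dvd x \<or> int p dvd y"
  by (simp add: prime_dvd_mult_iff)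

definition minv :: "nat \<Rightarrow> int \<Rightarrow> int" where "minv p u = modular_inverse (int p) u"

lemma minv: assumes "prime p" "\<not> int p dvd u" shows "int p dvd (u * minv p u - 1)"
proof -
  have "coprime u (int p)"
    using assms by (metis coprime_commute prime_imp_coprime primeI_int)
  then have "[u * modular_inverse (int p) u = 1] (mod int p)"
    by (rule cong_modular_inverse1)
  then show ?thesis by (simp add: minv_def cong_iff_dvd_diff)
qed

lemma minv1: "prime p \<Longrightarrow> minv p 1 = 1"
  using prime_gt_1_nat[of p] by (simp add: minv_def)

definition pt :: "nat \<Rightarrow> int \<times> int \<Rightarrow> nat" where
 "pt p u = (if int p dvd snd u then p else nat ((fst u * minv p (snd u)) mod int p))"
definition nzv :: "nat \<Rightarrow> int \<times> int \<Rightarrow> bool" where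
 "nzv p u \<longleftrightarrow> \<not> (int p dvd fst u \<and> int p dvd snd u)"
definition crs :: "int \<times> int \<Rightarrow> int \<times> int \<Rightarrow> int" where
 "crs u v = fst u * snd v - snd u * fst v"

lemma pt_le: "prime p \<Longrightarrow> pt p u \<le> p"
proof -
  assume "prime p"
  then have "int p > 0" using prime_gt_0_nat by simp
  then have "(fst u * minv p (snd u)) mod int p < int p" by simp
  then show ?thesis unfolding pt_def by auto
qed

lemma pt_lt: "prime p \<Longrightarrow> \<not> int p dvd snd u \<Longrightarrow> pt p u < p"
proof -
  assume "prime p" "\<not> int p dvd snd u"
  then have "int p > 0" using prime_gt_0_nat by simp
  then have "(fst u * minv p (snd u)) mod int p < int p" "(fst u * minv p (snd u)) mod int p \<ge> 0" by simp_all
  then show ?thesis unfolding pt_def using \<open>\<not> int p dvd snd u\<close> by (simp add: nat_less_iff)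
qed

lemma hcoord_p[simp]: "hcoord p p = (1,0)" by (simp add: hcoord_def)
lemma hcoord_lt: "x \<noteq> p \<Longrightarrow> hcoord p x = (int x, 1)" by (simp add: hcoord_def)

lemma pt_crs: assumes "prime p" "nzv p u" shows "int p dvd crs u (hcoord p (pt p u))"
proof (cases "int p dvd snd u")
  case True
  then show ?thesis by (simp add: pt_def crs_def)
next
  case False
  let ?y = "(fst u * minv p (snd u)) mod int p"
  have y0: "?y \<ge> 0" using assms prime_gt_0_nat by simp
  have lt: "pt p u \<noteq> p" using pt_lt[OF assms(1) False] by simp
  then have h: "hcoord p (pt p u) = (?y, 1)" using False y0 by (simp add: hcoord_def pt_def)
  have "int p dvd (?y - fst u * minv p (snd u))"
    by (simp add: mod_eq_dvd_iff[symmetric])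
  then have A: "int p dvd (snd u * ?y - snd u * (fst u * minv p (snd u)))"
    by (metis dvd_mult right_diff_distrib)
  have B: "int p dvd (fst u * (snd u * minv p (snd u) - 1))"
    by (rule dvd_mult) (rule minv[OF assms(1) False])
  have "crs u (hcoord p (pt p u)) = - (fst u * (snd u * minv p (snd u) - 1)) - (snd u * ?y - snd u * (fst u * minv p (snd u)))"
    by (simp add: h crs_def algebra_simps)
  then show ?thesis using A B by (metis dvd_diff dvd_minus_iff)
qed

lemma pt_unique: assumes "prime p" "nzv p u" "y \<le> p" "int p dvd crs u (hcoord p y)"
  shows "y = pt p u"
proof (cases "y = p")
  case True
  then have "int p dvd snd u" using assms(4) by (simp add: crs_def)
  then show ?thesis using True by (simp add: pt_def)
next
  case False
  then have h: "hcoord p y = (int y, 1)" by (simp add: hcoord_def)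
  then have d: "int p dvd (fst u - snd u * int y)" using assms(4) by (simp add: crs_def)
  have nd: "\<not> int p dvd snd u"
  proof
    assume "int p dvd snd u"
    then have "int p dvd snd u * int y" by simp
    then have "int p dvd fst u" using d by (metis dvd_diff_commute dvd_add_right_iff diff_add_cancel)
    then show False using assms(2) \<open>int p dvd snd u\<close> by (simp add: nzv_def)
  qed
  have m: "int p dvd (snd u * minv p (snd u) - 1)" using minv[OF assms(1) nd] .
  have "int p dvd ((fst u - snd u * int y) * minv p (snd u) + int y * (snd u * minv p (snd u) - 1))"
    using d m by simp
  then have "int p dvd (fst u * minv p (snd u) - int y)" by (simp add: algebra_simps)
  then have "(fst u * minv p (snd u)) mod int p = int y mod int p"
    by (simp add: mod_eq_dvd_iff)
  also have "\<dots> = int y" using False assms(3) by simp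
  finally show ?thesis using nd by (simp add: pt_def)
qed

lemma hcoord_nzv: "prime p \<Longrightarrow> nzv p (hcoord p y)"
  using prime_gt_1_nat[of p] by (auto simp: hcoord_def nzv_def zdvd_not_zless)

lemma crs_prop: assumes "prime p" "nzv p v" "int p dvd crs u v"
  shows "\<exists>l. int p dvd (fst u - l * fst v) \<and> int p dvd (snd u - l * snd v)"
proof (cases "int p dvd snd v")
  case False
  define l where "l = snd u * minv p (snd v)"
  have m: "int p dvd (snd v * minv p (snd v) - 1)" using minv[OF assms(1) False] .
  have "snd u - l * snd v = - (snd u * (snd v * minv p (snd v) - 1))" by (simp add: l_def algebra_simps)
  then have 1: "int p dvd (snd u - l * snd v)" using m by (metis dvd_minus_iff dvd_mult)
  have "fst u - l * fst v = (fst u * snd v - snd u * fst v) * minv p (snd v) - fst u * (snd v * minv p (snd v) - 1)"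
    by (simp add: l_def algebra_simps)
  then have 2: "int p dvd (fst u - l * fst v)" using m assms(3) unfolding crs_def
    by (metis dvd_diff dvd_mult dvd_mult2)
  show ?thesis using 1 2 by blast
next
  case True
  then have F: "\<not> int p dvd fst v" using assms(2) by (simp add: nzv_def)
  define l where "l = fst u * minv p (fst v)"
  have m: "int p dvd (fst v * minv p (fst v) - 1)" using minv[OF assms(1) F] .
  have "fst u - l * fst v = - (fst u * (fst v * minv p (fst v) - 1))" by (simp add: l_def algebra_simps)
  then have 1: "int p dvd (fst u - l * fst v)" using m by (metis dvd_minus_iff dvd_mult)
  have "snd u - l * snd v = - ((fst u * snd v - snd u * fst v) * minv p (fst v)) - snd u * (fst v * minv p (fst v) - 1)"
    by (simp add: l_def algebra_simps)
  then have 2: "int p dvd (snd u - l * snd v)" using m assms(3) unfolding crs_def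
    by (metis dvd_diff dvd_minus_iff dvd_mult dvd_mult2)
  show ?thesis using 1 2 by blast
qed

lemma crs_cong: assumes "int p dvd (fst u - l * fst w)" "int p dvd (snd u - l * snd w)" "int p dvd crs w h"
  shows "int p dvd crs u h"
proof -
  have "crs u h = (fst u - l * fst w) * snd h - (snd u - l * snd w) * fst h + l * crs w h"
    by (simp add: crs_def algebra_simps)
  then show ?thesis using assms by (metis dvd_add dvd_diff dvd_mult dvd_mult2)
qed

fun mapp :: "mat \<Rightarrow> int \<times> int \<Rightarrow> int \<times> int" where
  "mapp (a,b,c,d) (x,y) = (a*x+b*y, c*x+d*y)"
fun mmul :: "mat \<Rightarrow> mat \<Rightarrow> mat" where
  "mmul (a,b,c,d) (a',b',c',d') = (a*a'+b*c', a*b'+b*d', c*a'+d*c', c*b'+d*d')"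
fun mdet :: "mat \<Rightarrow> int" where "mdet (a,b,c,d) = a*d - b*c"

lemma mapp_mmul: "mapp (mmul M N) x = mapp M (mapp N x)"
  by (cases M; cases N; cases x) (simp add: algebra_simps)
lemma mdet_mmul: "mdet (mmul M N) = mdet M * mdet N"
  by (cases M; cases N) (simp add: algebra_simps)

lemma unit_mult: "prime p \<Longrightarrow> \<not> int p dvd x \<Longrightarrow> \<not> int p dvd y \<Longrightarrow> \<not> int p dvd (x * y)"
  using pdvd_mult by blast

lemma mapp_nzv: assumes "prime p" "\<not> int p dvd mdet M" "nzv p x" shows "nzv p (mapp M x)"
proof -
  obtain a b c d where M: "M = (a,b,c,d)" by (cases M) auto
  obtain x1 x2 where x: "x = (x1,x2)" by (cases x) auto
  show ?thesis
  proof (rule ccontr)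
    assume "\<not> nzv p (mapp M x)"
    then have 1: "int p dvd (a*x1+b*x2)" and 2: "int p dvd (c*x1+d*x2)" by (auto simp: nzv_def M x)
    have "(a*d-b*c)*x1 = d*(a*x1+b*x2) - b*(c*x1+d*x2)" by (simp add: algebra_simps)
    then have "int p dvd (a*d-b*c)*x1" using 1 2 by simp
    then have "int p dvd x1" using assms(2) pdvd_mult[OF assms(1)] M by auto
    have "(a*d-b*c)*x2 = a*(c*x1+d*x2) - c*(a*x1+b*x2)" by (simp add: algebra_simps)
    then have "int p dvd (a*d-b*c)*x2" using 1 2 by simp
    then have "int p dvd x2" using assms(2) pdvd_mult[OF assms(1)] M by auto
    then show False using \<open>int p dvd x1\<close> assms(3) x by (simp add: nzv_def)
  qed
qed

lemma mapp_cong: assumes "int p dvd (fst u - l * fst w)" "int p dvd (snd u - l * snd w)"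
  shows "int p dvd (fst (mapp M u) - l * fst (mapp M w)) \<and> int p dvd (snd (mapp M u) - l * snd (mapp M w))"
proof -
  obtain a b c d where M: "M = (a,b,c,d)" by (cases M) auto
  obtain x1 x2 where x: "u = (x1,x2)" by (cases u) auto
  obtain y1 y2 where y: "w = (y1,y2)" by (cases w) auto
  have e1: "fst (mapp M u) - l * fst (mapp M w) = a * (x1 - l*y1) + b*(x2 - l*y2)" by (simp add: M x y algebra_simps)
  have e2: "snd (mapp M u) - l * snd (mapp M w) = c * (x1 - l*y1) + d*(x2 - l*y2)" by (simp add: M x y algebra_simps)
  have A1: "int p dvd (x1 - l*y1)" "int p dvd (x2 - l*y2)" using assms x y by simp_all
  show ?thesis unfolding e1 e2 by (intro conjI dvd_add dvd_mult A1)
qed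

definition mob :: "nat \<Rightarrow> mat \<Rightarrow> nat \<Rightarrow> nat" where
  "mob p M = (\<lambda>z\<in>{0..p}. pt p (mapp M (hcoord p z)))"

lemma mob_le: "prime p \<Longrightarrow> z \<le> p \<Longrightarrow> mob p M z \<le> p"
  by (simp add: mob_def pt_le)

lemma mob_comp: assumes "prime p" "\<not> int p dvd mdet M" "\<not> int p dvd mdet N"
  shows "compose {0..p} (mob p M) (mob p N) = mob p (mmul M N)"
proof (rule ext)
  fix z
  show "compose {0..p} (mob p M) (mob p N) z = mob p (mmul M N) z"
  proof (cases "z \<le> p")
    case False then show ?thesis by (simp add: compose_def mob_def)
  next
    case True
    let ?x = "hcoord p z"
    let ?y = "pt p (mapp N ?x)"
    have yle: "?y \<le> p" using pt_le[OF assms(1)] .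
    have nx: "nzv p (mapp N ?x)" using mapp_nzv[OF assms(1,3) hcoord_nzv[OF assms(1)]] .
    have c1: "int p dvd crs (mapp N ?x) (hcoord p ?y)" using pt_crs[OF assms(1) nx] .
    obtain l where l: "int p dvd (fst (mapp N ?x) - l * fst (hcoord p ?y))"
        "int p dvd (snd (mapp N ?x) - l * snd (hcoord p ?y))"
      using crs_prop[OF assms(1) hcoord_nzv[OF assms(1)] c1] by blast
    have l2: "int p dvd (fst (mapp M (mapp N ?x)) - l * fst (mapp M (hcoord p ?y))) \<and>
              int p dvd (snd (mapp M (mapp N ?x)) - l * snd (mapp M (hcoord p ?y)))"
      using mapp_cong[OF l] .
    let ?y' = "pt p (mapp M (hcoord p ?y))"
    have nh: "nzv p (mapp M (hcoord p ?y))" using mapp_nzv[OF assms(1,2) hcoord_nzv[OF assms(1)]] .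
    have c2: "int p dvd crs (mapp M (hcoord p ?y)) (hcoord p ?y')" using pt_crs[OF assms(1) nh] .
    have c3: "int p dvd crs (mapp (mmul M N) ?x) (hcoord p ?y')"
      unfolding mapp_mmul using crs_cong l2 c2 by blast
    have nmn: "nzv p (mapp (mmul M N) ?x)"
      using mapp_nzv[OF assms(1) _ hcoord_nzv[OF assms(1)]] assms unit_mult by (simp add: mdet_mmul)
    have "?y' = pt p (mapp (mmul M N) ?x)"
      using pt_unique[OF assms(1) nmn pt_le[OF assms(1)] c3] .
    then show ?thesis using True yle by (simp add: compose_def mob_def)
  qed
qed

lemma mob_scale_cong: assumes "prime p" "\<not> int p dvd mdet M" "\<not> int p dvd mdet M'"
  and "int p dvd (fst M - l * fst M')" "int p dvd (fst (snd M) - l * fst (snd M'))"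
  "int p dvd (fst (snd (snd M)) - l * fst (snd (snd M')))" "int p dvd (snd (snd (snd M)) - l * snd (snd (snd M')))"
  shows "mob p M = mob p M'"
proof (rule ext)
  fix z
  obtain a b c d where M: "M = (a,b,c,d)" by (cases M) auto
  obtain a' b' c' d' where M': "M' = (a',b',c',d')" by (cases M') auto
  show "mob p M z = mob p M' z"
  proof (cases "z \<le> p")
    case False then show ?thesis by (simp add: mob_def)
  next
    case True
    obtain x1 x2 where x: "hcoord p z = (x1,x2)" by (cases "hcoord p z") auto
    let ?y = "pt p (mapp M' (x1,x2))"
    have n': "nzv p (mapp M' (x1,x2))" using mapp_nzv[OF assms(1,3) hcoord_nzv[OF assms(1)]] x by metis
    have n: "nzv p (mapp M (x1,x2))" using mapp_nzv[OF assms(1,2) hcoord_nzv[OF assms(1)]] x by metis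
    have c: "int p dvd crs (mapp M' (x1,x2)) (hcoord p ?y)" using pt_crs[OF assms(1) n'] .
    have e1: "fst (mapp M (x1,x2)) - l * fst (mapp M' (x1,x2)) = (a - l*a')*x1 + (b - l*b')*x2"
      by (simp add: M M' algebra_simps)
    have e2: "snd (mapp M (x1,x2)) - l * snd (mapp M' (x1,x2)) = (c - l*c')*x1 + (d - l*d')*x2"
      by (simp add: M M' algebra_simps)
    have g1: "int p dvd fst (mapp M (x1,x2)) - l * fst (mapp M' (x1,x2))"
      unfolding e1 by (intro dvd_add dvd_mult2) (use assms(4,5) in \<open>simp_all add: M M'\<close>)
    have g2: "int p dvd snd (mapp M (x1,x2)) - l * snd (mapp M' (x1,x2))"
      unfolding e2 by (intro dvd_add dvd_mult2) (use assms(6,7) in \<open>simp_all add: M M'\<close>)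
    have "int p dvd crs (mapp M (x1,x2)) (hcoord p ?y)"
      by (rule crs_cong[OF g1 g2 c])
    then have "?y = pt p (mapp M (x1,x2))" using pt_unique[OF assms(1) n pt_le[OF assms(1)]] by blast
    then show ?thesis using True x by (simp add: mob_def)
  qed
qed

lemma mob_cong: assumes "prime p" "\<not> int p dvd mdet M" "\<not> int p dvd mdet M'"
  and "int p dvd (fst M - fst M')" "int p dvd (fst (snd M) - fst (snd M'))"
  "int p dvd (fst (snd (snd M)) - fst (snd (snd M')))" "int p dvd (snd (snd (snd M)) - snd (snd (snd M')))"
  shows "mob p M = mob p M'"
  using mob_scale_cong[OF assms(1-3), of 1] assms(4-7) by simp

lemma mob_id: assumes "prime p" "\<not> int p dvd l" shows "mob p (l,0,0,l) = (\<lambda>z\<in>{0..p}. z)"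
proof (rule ext)
  fix z show "mob p (l,0,0,l) z = (\<lambda>z\<in>{0..p}. z) z"
  proof (cases "z \<le> p")
    case True
    obtain x1 x2 where x: "hcoord p z = (x1,x2)" by (cases "hcoord p z") auto
    have n: "nzv p (l*x1, l*x2)"
      using hcoord_nzv[OF assms(1), of z] assms(2) x pdvd_mult[OF assms(1)] by (auto simp: nzv_def)
    have "int p dvd crs (l*x1, l*x2) (hcoord p z)" by (simp add: x crs_def)
    then have "z = pt p (l*x1, l*x2)" using pt_unique[OF assms(1) n True] by blast
    then show ?thesis using True x by (simp add: mob_def)
  qed (simp add: mob_def)
qed

lemma mob_moebius: assumes "prime p" "\<not> int p dvd (a*d - b*c)"
  shows "moebius_perm p a b c d (mob p (a,b,c,d))"
  unfolding moebius_perm_def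
proof
  fix x assume x: "x \<in> {0..p}"
  obtain x1 x2 where h: "hcoord p x = (x1,x2)" by (cases "hcoord p x") auto
  have n: "nzv p (mapp (a,b,c,d) (x1,x2))" using mapp_nzv[OF assms(1) _ hcoord_nzv[OF assms(1)]] assms(2) h by (metis mdet.simps)
  have "int p dvd crs (mapp (a,b,c,d) (x1,x2)) (hcoord p (pt p (mapp (a,b,c,d) (x1,x2))))" using pt_crs[OF assms(1) n] .
  then show "[(a * fst (hcoord p x) + b * snd (hcoord p x)) * snd (hcoord p (mob p (a, b, c, d) x)) =
          (c * fst (hcoord p x) + d * snd (hcoord p x)) * fst (hcoord p (mob p (a, b, c, d) x))] (mod int p)"
    using x h by (simp add: mob_def crs_def cong_iff_dvd_diff)
qed

lemma moebius_mob: assumes "prime p" "\<not> int p dvd (a*d - b*c)" "moebius_perm p a b c d \<sigma>" "\<sigma> \<in> Bij {0..p}"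
  shows "\<sigma> = mob p (a,b,c,d)"
proof (rule ext)
  fix z
  show "\<sigma> z = mob p (a,b,c,d) z"
  proof (cases "z \<le> p")
    case False
    then have "\<sigma> z = undefined" using Bij_imp_extensional[OF assms(4)] by (simp add: extensional_def)
    then show ?thesis using False by (simp add: mob_def)
  next
    case True
    obtain x1 x2 where h: "hcoord p z = (x1,x2)" by (cases "hcoord p z") auto
    have n: "nzv p (mapp (a,b,c,d) (x1,x2))" using mapp_nzv[OF assms(1) _ hcoord_nzv[OF assms(1)]] assms(2) h by (metis mdet.simps)
    have sz: "\<sigma> z \<le> p" using Bij_imp_funcset[OF assms(4)] True by auto
    have "[(a * x1 + b * x2) * snd (hcoord p (\<sigma> z)) = (c * x1 + d * x2) * fst (hcoord p (\<sigma> z))] (mod int p)"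
      using assms(3) True h unfolding moebius_perm_def by force
    then have "int p dvd crs (mapp (a,b,c,d) (x1,x2)) (hcoord p (\<sigma> z))"
      by (simp add: crs_def cong_iff_dvd_diff)
    then have "\<sigma> z = pt p (mapp (a,b,c,d) (x1,x2))" using pt_unique[OF assms(1) n sz] by blast
    then show ?thesis using True h by (simp add: mob_def)
  qed
qed

lemma mob_bij: assumes "prime p" "\<not> int p dvd mdet M" shows "mob p M \<in> Bij {0..p}"
proof -
  obtain a b c d where M: "M = (a,b,c,d)" by (cases M) auto
  let ?A = "(d,-b,-c,a)"
  have dA: "mdet ?A = mdet M" by (simp add: M algebra_simps)
  have 1: "compose {0..p} (mob p M) (mob p ?A) = (\<lambda>z\<in>{0..p}. z)"
    using mob_comp[OF assms(1,2)] dA assms mob_id[OF assms(1,2)] by (simp add: M algebra_simps)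
  have 2: "compose {0..p} (mob p ?A) (mob p M) = (\<lambda>z\<in>{0..p}. z)"
    using mob_comp[OF assms(1) _ assms(2), of ?A] dA assms mob_id[OF assms(1,2)] by (simp add: M algebra_simps)
  have "bij_betw (mob p M) {0..p} {0..p}"
  proof (rule bij_betw_byWitness[where f'="mob p ?A"])
    show "\<forall>a\<in>{0..p}. mob p ?A (mob p M a) = a"
    proof
      fix a assume "a \<in> {0..p}" then show "mob p ?A (mob p M a) = a" using fun_cong[OF 2, of a] by (simp add: compose_def)
    qed
    show "\<forall>a\<in>{0..p}. mob p M (mob p ?A a) = a"
    proof
      fix a assume "a \<in> {0..p}" then show "mob p M (mob p ?A a) = a" using fun_cong[OF 1, of a] by (simp add: compose_def)
    qed
    show "mob p M ` {0..p} \<subseteq> {0..p}" using mob_le[OF assms(1), of _ M] by auto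
    show "mob p ?A ` {0..p} \<subseteq> {0..p}" using mob_le[OF assms(1), of _ ?A] by auto
  qed
  then show ?thesis unfolding Bij_def by (simp add: mob_def)
qed

lemma mob_inf: "mob p (a,b,c,d) p = pt p (a,c)"
  by (simp add: mob_def)

lemma mob_fix_inf: "prime p \<Longrightarrow> mob p (a,b,c,d) p = p \<longleftrightarrow> int p dvd c"
  using pt_lt[of p "(a,c)"] by (auto simp: mob_inf pt_def)

lemma mob_eq_id: assumes "prime p" "\<not> int p dvd mdet (a,b,c,d)" "mob p (a,b,c,d) = (\<lambda>z\<in>{0..p}. z)"
  shows "int p dvd b \<and> int p dvd c \<and> int p dvd (a - d)"
proof -
  have p1: "p > 1" using prime_gt_1_nat[OF assms(1)] .
  have "mob p (a,b,c,d) p = p" using assms(3) by simp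
  then have c: "int p dvd c" using mob_fix_inf[OF assms(1)] by simp
  have n0: "nzv p (mapp (a,b,c,d) (hcoord p 0))" using mapp_nzv[OF assms(1,2) hcoord_nzv[OF assms(1)]] .
  have "mob p (a,b,c,d) 0 = 0" using assms(3) by simp
  then have "int p dvd crs (mapp (a,b,c,d) (hcoord p 0)) (hcoord p 0)"
    using pt_crs[OF assms(1) n0] by (simp add: mob_def)
  then have b: "int p dvd b" using p1 by (simp add: hcoord_def crs_def)
  have n1: "nzv p (mapp (a,b,c,d) (hcoord p 1))" using mapp_nzv[OF assms(1,2) hcoord_nzv[OF assms(1)]] .
  have "mob p (a,b,c,d) 1 = 1" using assms(3) p1 by simp
  then have "int p dvd crs (mapp (a,b,c,d) (hcoord p 1)) (hcoord p 1)"
    using pt_crs[OF assms(1) n1] p1 by (simp add: mob_def)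
  then have "int p dvd (a + b - (c + d))" using p1 by (simp add: hcoord_def crs_def)
  moreover have "a - d = (a + b - (c + d)) - b + c" by simp
  ultimately have "int p dvd (a - d)" using b c by (metis dvd_add dvd_diff)
  then show ?thesis using b c by simp
qed

lemma mob_transl: assumes "prime p" "z \<le> p"
  shows "mob p (1,e,0,1) z = (if z = p then p else nat ((int z + e) mod int p))"
  using assms minv1[OF assms(1)] by (auto simp: mob_def pt_def hcoord_def)

lemma mmul_assoc: "mmul (mmul A B) C = mmul A (mmul B C)"
  by (cases A; cases B; cases C) (simp add: algebra_simps)
lemma mmul_id1[simp]: "mmul (1,0,0,1) A = A" by (cases A) simp
lemma mmul_id2[simp]: "mmul A (1,0,0,1) = A" by (cases A) simp

fun mpow :: "mat \<Rightarrow> nat \<Rightarrow> mat" where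
  "mpow M 0 = (1,0,0,1)"
| "mpow M (Suc n) = mmul (mpow M n) M"

lemma mdet_mpow: "mdet (mpow M n) = mdet M ^ n"
  by (induction n) (simp_all add: mdet_mmul)

lemma unit_pow: "prime p \<Longrightarrow> \<not> int p dvd x \<Longrightarrow> \<not> int p dvd x ^ n"
proof (induction n)
  case (Suc n) then show ?case using unit_mult[of p x "x^n"] by simp
qed (use prime_gt_1_nat in \<open>auto simp: zdvd1_eq\<close>)

lemma mpow_tri: "\<exists>x. mpow (a,b,0,d) n = (a^n, x, 0, d^n)"
proof (induction n)
  case (Suc n)
  then obtain x where "mpow (a,b,0,d) n = (a^n, x, 0, d^n)" by blast
  then show ?case by simp
qed simp

lemma mpow_transl: "mpow (1,e,0,1) n = (1, int n * e, 0, 1)"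
  by (induction n) (auto simp: algebra_simps)

lemma cayley3: "mmul (mmul (a,b,c,d) (a,b,c,d)) (a,b,c,d) =
  (((a+d)^2 - (a*d-b*c))*a - (a+d)*(a*d-b*c), ((a+d)^2 - (a*d-b*c))*b, ((a+d)^2 - (a*d-b*c))*c,
   ((a+d)^2 - (a*d-b*c))*d - (a+d)*(a*d-b*c))"
  by (simp add: algebra_simps power2_eq_square)

lemma fermat_int: assumes "prime p" shows "int p dvd (a ^ p - a)"
proof (cases "int p dvd a")
  case True
  have "a dvd a ^ p" using prime_gt_0_nat[OF assms] by (simp add: dvd_power)
  then show ?thesis using True by (metis dvd_diff dvd_trans)
next
  case False
  define n where "n = nat (a mod int p)"
  have pn: "int n = a mod int p" using prime_gt_0_nat[OF assms] by (simp add: n_def)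
  have "\<not> p dvd n"
  proof
    assume "p dvd n" then have "int p dvd int n" by simp
    then show False using False pn by (simp add: dvd_mod_iff)
  qed
  then have "[n ^ (p - 1) = 1] (mod p)" using fermat_theorem[OF assms] by blast
  then have "[int n ^ (p - 1) = 1] (mod int p)" by (metis cong_int_iff of_nat_1 of_nat_power)
  moreover have "[int n = a] (mod int p)" using pn by (simp add: cong_def)
  ultimately have "[a ^ (p - 1) = 1] (mod int p)" by (metis cong_pow cong_sym cong_trans)
  then have "[a * a ^ (p - 1) = a * 1] (mod int p)" by (rule cong_scalar_left)
  moreover have "a * a ^ (p - 1) = a ^ p" using prime_gt_0_nat[OF assms]
    by (metis Suc_diff_1 power_Suc)
  ultimately show ?thesis by (simp add: cong_iff_dvd_diff)
qed

lemma mob_idem: assumes "prime p" "\<not> int p dvd mdet M" "compose {0..p} (mob p M) (mob p M) = mob p M"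
  shows "mob p M = (\<lambda>z\<in>{0..p}. z)"
proof (rule ext)
  fix z
  have b: "mob p M \<in> Bij {0..p}" using mob_bij[OF assms(1,2)] .
  then have inj: "inj_on (mob p M) {0..p}" by (simp add: Bij_def bij_betw_def)
  show "mob p M z = (\<lambda>z\<in>{0..p}. z) z"
  proof (cases "z \<le> p")
    case True
    have "mob p M (mob p M z) = mob p M z" using fun_cong[OF assms(3), of z] True by (simp add: compose_def)
    moreover have "mob p M z \<in> {0..p}" using mob_le[OF assms(1) True] by simp
    ultimately have "mob p M z = z" using inj True by (simp add: inj_on_def)
    then show ?thesis using True by simp
  qed (simp add: mob_def)
qed

lemma legendre_case: assumes "prime p" "p mod 4 = 3" "\<not> int p dvd D"
  shows "(\<exists>w. int p dvd (w^2 - D)) \<or> (\<exists>w. int p dvd (w^2 + D))"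
proof -
  have p2: "2 < p" using assms(2) prime_gt_1_nat[OF assms(1)] by (cases "p = 2") auto
  have ucong: "[D \<noteq> 0] (mod int p)" using assms(3) by (simp add: cong_0_iff)
  have uneg: "\<not> int p dvd (- D)" using assms(3) by simp
  have oddh: "odd ((p - 1) div 2)" using assms(2) by presburger
  have e1: "[Legendre D (int p) = D ^ ((p - 1) div 2)] (mod int p)" using euler_criterion[OF assms(1) p2] by simp
  have e2: "[Legendre (-D) (int p) = (-D) ^ ((p - 1) div 2)] (mod int p)" using euler_criterion[OF assms(1) p2] by simp
  have neg: "(-D) ^ ((p - 1) div 2) = - (D ^ ((p - 1) div 2))" using oddh by simp
  show ?thesis
  proof (cases "QuadRes (int p) D")
    case True
    then obtain w where "[w^2 = D] (mod int p)" by (auto simp: QuadRes_def)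
    then show ?thesis by (auto simp: cong_iff_dvd_diff)
  next
    case False
    then have "Legendre D (int p) = -1" using ucong by (simp add: Legendre_def cong_0_iff)
    then have a: "[-1 = D ^ ((p - 1) div 2)] (mod int p)" using e1 by simp
    have "QuadRes (int p) (-D)"
    proof (rule ccontr)
      assume nq: "\<not> QuadRes (int p) (-D)"
      then have "Legendre (-D) (int p) = -1" using uneg by (simp add: Legendre_def cong_0_iff)
      then have "[-1 = - (D ^ ((p - 1) div 2))] (mod int p)" using e2 neg by simp
      then have "[1 = D ^ ((p - 1) div 2)] (mod int p)" by (metis cong_minus_minus_iff minus_minus)
      then have "[-1 = 1] (mod int p)" using a by (metis cong_sym cong_trans)
      then have "int p dvd 2" by (simp add: cong_iff_dvd_diff)
      then have "p dvd 2" by (metis int_dvd_int_iff of_nat_numeral)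
      then show False using p2 by (simp add: nat_dvd_not_less)
    qed
    then obtain w where "[w^2 = -D] (mod int p)" by (auto simp: QuadRes_def)
    then show ?thesis by (auto simp: cong_iff_dvd_diff)
  qed
qed

lemma pg_group: "subgroup H (BijGroup X) \<Longrightarrow> group (perm_group X H)"
  unfolding perm_group_def by (rule subgroup.subgroup_is_group[OF _ group_BijGroup])

lemma pg_carrier[simp]: "carrier (perm_group X H) = H"
  by (simp add: perm_group_def)

lemma sub_Bij: "subgroup H (BijGroup X) \<Longrightarrow> g \<in> H \<Longrightarrow> g \<in> Bij X"
  using subgroup.subset by (fastforce simp: BijGroup_def)

lemma pg_mult: assumes "subgroup H (BijGroup X)" "g \<in> H" "h \<in> H" shows "g \<otimes>\<^bsub>perm_group X H\<^esub> h = compose X g h"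
  using sub_Bij[OF assms(1,2)] sub_Bij[OF assms(1,3)] by (simp add: perm_group_def BijGroup_def)

lemma pg_one: "\<one>\<^bsub>perm_group X H\<^esub> = (\<lambda>x\<in>X. x)"
  by (simp add: perm_group_def BijGroup_def)

lemma bij_mult: "g \<in> Bij X \<Longrightarrow> h \<in> Bij X \<Longrightarrow> g \<otimes>\<^bsub>BijGroup X\<^esub> h = compose X g h"
  by (simp add: BijGroup_def)

lemma pg_pow: "x [^]\<^bsub>perm_group X H\<^esub> (n::nat) = x [^]\<^bsub>BijGroup X\<^esub> n"
  unfolding perm_group_def using monoid.nat_pow_consistent[OF group.is_monoid[OF group_BijGroup]] by metis

lemma Bij_app: "g \<in> Bij X \<Longrightarrow> x \<in> X \<Longrightarrow> g x \<in> X"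
  using Bij_imp_funcset by fastforce

lemma stab_subgroup: assumes "subgroup H (BijGroup X)" "x \<in> X"
  shows "subgroup {g\<in>H. g x = x} (BijGroup X)"
proof (rule group.subgroupI[OF group_BijGroup])
  show "{g \<in> H. g x = x} \<subseteq> carrier (BijGroup X)" using subgroup.subset[OF assms(1)] by auto
  show "{g \<in> H. g x = x} \<noteq> {}" using subgroup.one_closed[OF assms(1)] assms(2) by (auto simp: BijGroup_def)
next
  fix g assume g: "g \<in> {g \<in> H. g x = x}"
  then have gB: "g \<in> Bij X" using sub_Bij[OF assms(1)] by auto
  have "inv\<^bsub>BijGroup X\<^esub> g = (\<lambda>y\<in>X. inv_into X g y)" using inv_BijGroup[OF gB] .
  moreover have "inv_into X g x = x"
    using g gB assms(2) by (metis (mono_tags, lifting) Bij_def Int_iff bij_betw_def inv_into_f_f mem_Collect_eq)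
  moreover have "inv\<^bsub>BijGroup X\<^esub> g \<in> H" using subgroup.m_inv_closed[OF assms(1)] g by auto
  ultimately show "inv\<^bsub>BijGroup X\<^esub> g \<in> {g \<in> H. g x = x}"
    using assms(2) by auto
next
  fix g h assume "g \<in> {g \<in> H. g x = x}" "h \<in> {g \<in> H. g x = x}"
  then show "g \<otimes>\<^bsub>BijGroup X\<^esub> h \<in> {g \<in> H. g x = x}"
    using subgroup.m_closed[OF assms(1)] sub_Bij[OF assms(1)] assms(2) by (auto simp: bij_mult compose_def)
qed

lemma incl_action: assumes "subgroup H (BijGroup X)"
  shows "group_action (perm_group X H) X (\<lambda>g. g)"
  unfolding group_action_def group_hom_def group_hom_axioms_def
proof (intro conjI)
  show "group (perm_group X H)" using pg_group[OF assms] .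
  show "group (BijGroup X)" by (rule group_BijGroup)
  show "(\<lambda>g. g) \<in> hom (perm_group X H) (BijGroup X)"
    unfolding hom_def using sub_Bij[OF assms] by (auto simp: pg_mult[OF assms] bij_mult BijGroup_def)
qed

lemma perm_orbit_stab: assumes "subgroup H (BijGroup X)" "x \<in> X"
  shows "card {g x | g. g \<in> H} * card {g\<in>H. g x = x} = card H"
proof -
  interpret group_action "perm_group X H" X "\<lambda>g. g" using incl_action[OF assms(1)] .
  have "card (orbit (perm_group X H) (\<lambda>g. g) x) * card (stabilizer (perm_group X H) (\<lambda>g. g) x) = order (perm_group X H)"
    by (rule orbit_stabilizer_theorem[OF assms(2)])
  then show ?thesis by (simp add: orbit_def stabilizer_def order_def)
qed

lemma mob_sandwich: assumes "prime p" "\<not> int p dvd mdet X" "\<not> int p dvd mdet A" "\<not> int p dvd mdet B"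
  "\<not> int p dvd mdet Y" "mob p A = mob p B"
  shows "mob p (mmul X (mmul A Y)) = mob p (mmul X (mmul B Y))"
proof -
  have "mob p (mmul X (mmul A Y)) = compose {0..p} (mob p X) (compose {0..p} (mob p A) (mob p Y))"
    using mob_comp[OF assms(1,3,5)] mob_comp[OF assms(1,2)] assms(3,5) unit_mult[OF assms(1)] by (simp add: mdet_mmul)
  also have "\<dots> = compose {0..p} (mob p X) (compose {0..p} (mob p B) (mob p Y))" using assms(6) by simp
  also have "\<dots> = mob p (mmul X (mmul B Y))"
    using mob_comp[OF assms(1,4,5)] mob_comp[OF assms(1,2)] assms(4,5) unit_mult[OF assms(1)] by (simp add: mdet_mmul)
  finally show ?thesis .
qed

lemma fixpt: assumes pr: "prime p" and sub: "subgroup P (BijGroup V)" and cP: "card P = p"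
  and hom: "\<forall>g\<in>P. \<forall>h\<in>P. \<phi> (compose V g h) = compose {0..p} (\<phi> g) (\<phi> h)"
  and inB: "\<forall>g\<in>P. \<phi> g \<in> Bij {0..p}"
  shows "\<exists>y\<le>p. \<forall>g\<in>P. \<phi> g y = y"
proof -
  have ga: "group_action (perm_group V P) {0..p} \<phi>"
    unfolding group_action_def group_hom_def group_hom_axioms_def
  proof (intro conjI)
    show "group (perm_group V P)" using pg_group[OF sub] .
    show "group (BijGroup {0..p})" by (rule group_BijGroup)
    show "\<phi> \<in> hom (perm_group V P) (BijGroup {0..p})"
      unfolding hom_def using inB hom by (auto simp: pg_mult[OF sub] bij_mult BijGroup_def)
  qed
  interpret group_action "perm_group V P" "{0..p}" \<phi> by (rule ga)
  have sum: "(\<Sum>orb\<in>orbits (perm_group V P) {0..p} \<phi>. \<Sum>x\<in>orb. (1::nat)) = (\<Sum>x\<in>{0..p}. 1)"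
    by (rule disjoint_sum) simp
  have cards: "card orb = 1 \<or> card orb = p" if orbin: "orb \<in> orbits (perm_group V P) {0..p} \<phi>" for orb
  proof -
    obtain x where x: "x \<in> {0..p}" "orb = orbit (perm_group V P) \<phi> x" using orbin unfolding orbits_def by blast
    have "card orb * card (stabilizer (perm_group V P) \<phi> x) = p"
      using orbit_stabilizer_theorem[OF x(1)] x(2) cP by (simp add: order_def)
    then have "card orb dvd p" by (metis dvd_triv_left)
    then show ?thesis using pr by (simp add: prime_nat_iff)
  qed
  have "\<exists>orb\<in>orbits (perm_group V P) {0..p} \<phi>. card orb = 1"
  proof (rule ccontr)
    assume "\<not> ?thesis"
    then have "\<forall>orb\<in>orbits (perm_group V P) {0..p} \<phi>. card orb = p" using cards by blast
    then have "(\<Sum>orb\<in>orbits (perm_group V P) {0..p} \<phi>. \<Sum>x\<in>orb. (1::nat)) = (\<Sum>orb\<in>orbits (perm_group V P) {0..p} \<phi>. p)"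
      by simp
    then have "p * card (orbits (perm_group V P) {0..p} \<phi>) = Suc p" using sum by (simp add: mult.commute)
    then have "p dvd Suc p" by (metis dvd_triv_left)
    then have "p dvd 1" using dvd_add_right_iff[of p p 1] by simp
    then show False using pr by simp
  qed
  then obtain orb where orb: "orb \<in> orbits (perm_group V P) {0..p} \<phi>" "card orb = 1" by blast
  obtain x where x: "x \<in> {0..p}" "orb = orbit (perm_group V P) \<phi> x" using orb(1) unfolding orbits_def by blast
  have "x \<in> orb" using orbit_refl[OF x(1)] x(2) by simp
  then have ox: "orb = {x}" using orb(2) by (metis card_1_singletonE singletonD)
  show ?thesis
  proof (intro exI conjI ballI)
    show "x \<le> p" using x by simp
    fix g assume "g \<in> P"
    then have "\<phi> g x \<in> orb" using x(2) by (auto simp: orbit_def)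
    then show "\<phi> g x = x" using ox by simp
  qed
qed

lemma finite_Bij: "finite X \<Longrightarrow> finite (Bij X)"
proof -
  assume f: "finite X"
  have "Bij X \<subseteq> PiE X (\<lambda>_. X)" by (auto simp: Bij_def bij_betw_def PiE_def Pi_def)
  moreover have "finite (PiE X (\<lambda>_. X))" using f by (simp add: finite_PiE)
  ultimately show ?thesis by (rule finite_subset)
qed

lemma small_eq: assumes "prime p" "a < p" "b < p" "\<not> int p dvd \<beta>" "int p dvd ((int a - int b) * \<beta>)"
  shows "a = b"
proof -
  have "int p dvd (int a - int b)" using pdvd_mult[OF assms(1) assms(5)] assms(4) by blast
  then have "int a mod int p = int b mod int p" by (simp add: mod_eq_dvd_iff)
  then show ?thesis using assms(2,3) by simp
qed

lemma core:
  fixes V :: "'v set" and E :: "'v \<Rightarrow> 'v \<Rightarrow> bool" and G :: "('v \<Rightarrow> 'v) set" and p :: nat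
    and \<phi> :: "('v \<Rightarrow> 'v) \<Rightarrow> nat \<Rightarrow> nat"
  assumes pr: "prime p" and p2: "2 < p"
  and sg: "simple_graph V E" and conn: "graph_connected V E" and val: "valency V E p" and Vne: "V \<noteq> {}"
  and sub: "subgroup G (BijGroup V)" and aut: "G \<subseteq> graph_aut V E" and at: "arc_transitive V E G"
  and phom: "\<forall>g\<in>G. \<forall>h\<in>G. \<phi> (compose V g h) = compose {0..p} (\<phi> g) (\<phi> h)"
  and pinj: "inj_on \<phi> G"
  and pmob: "\<forall>g\<in>G. \<exists>M. \<not> int p dvd mdet M \<and> \<phi> g = mob p M"
  and cs: "(\<forall>g\<in>G. \<exists>M. int p dvd (mdet M - 1) \<and> \<phi> g = mob p M) \<or>
           (p mod 4 = 3 \<and> (\<forall>v\<in>V. even (card {g\<in>G. g v = v}) \<and> card {g\<in>G. g v = v} < p^2))"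
  shows "has_triangle V E"
proof -
  have finV: "finite V" using sg by (simp add: simple_graph_def)
  have Eprops: "\<And>x y. E x y \<Longrightarrow> x \<in> V \<and> y \<in> V \<and> E y x \<and> x \<noteq> y" using sg unfolding simple_graph_def by fastforce
  have GB: "\<And>g. g \<in> G \<Longrightarrow> g \<in> Bij V" using sub_Bij[OF sub] .
  have gV: "\<And>g x. g \<in> G \<Longrightarrow> x \<in> V \<Longrightarrow> g x \<in> V" by (rule Bij_app[OF GB])
  have gE: "\<And>g x y. g \<in> G \<Longrightarrow> x \<in> V \<Longrightarrow> y \<in> V \<Longrightarrow> E x y \<longleftrightarrow> E (g x) (g y)"
    using aut by (auto simp: graph_aut_def)
  have grp: "group (perm_group V G)" using pg_group[OF sub] .
  have mulG: "\<And>g h. g \<in> G \<Longrightarrow> h \<in> G \<Longrightarrow> g \<otimes>\<^bsub>perm_group V G\<^esub> h = compose V g h" using pg_mult[OF sub] .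
  have clos: "\<And>g h. g \<in> G \<Longrightarrow> h \<in> G \<Longrightarrow> compose V g h \<in> G"
    using monoid.m_closed[OF group.is_monoid[OF grp]] mulG by (metis pg_carrier)
  have appc: "\<And>g h x. x \<in> V \<Longrightarrow> compose V g h x = g (h x)" by (simp add: compose_def)
  have oneG: "(\<lambda>x\<in>V. x) \<in> G" using monoid.one_closed[OF group.is_monoid[OF grp]] by (simp add: pg_one)
  have extG: "\<And>g h. g \<in> G \<Longrightarrow> h \<in> G \<Longrightarrow> (\<forall>x\<in>V. g x = h x) \<Longrightarrow> g = h"
    using GB Bij_imp_extensional extensionalityI by metis
  have invG: "\<And>g. g \<in> G \<Longrightarrow> \<exists>g'\<in>G. \<forall>x\<in>V. g' (g x) = x \<and> g (g' x) = x"
  proof -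
    fix g assume g: "g \<in> G"
    let ?i = "inv\<^bsub>perm_group V G\<^esub> g"
    have i: "?i \<in> G" using group.inv_closed[OF grp] g by simp
    have "?i \<otimes>\<^bsub>perm_group V G\<^esub> g = \<one>\<^bsub>perm_group V G\<^esub>" "g \<otimes>\<^bsub>perm_group V G\<^esub> ?i = \<one>\<^bsub>perm_group V G\<^esub>"
      using group.l_inv[OF grp] group.r_inv[OF grp] g by simp_all
    then have "compose V ?i g = (\<lambda>x\<in>V. x)" "compose V g ?i = (\<lambda>x\<in>V. x)" using mulG[OF i g] mulG[OF g i] by (simp_all add: pg_one)
    then have "\<forall>x\<in>V. ?i (g x) = x \<and> g (?i x) = x" by (metis appc restrict_apply)
    then show "\<exists>g'\<in>G. \<forall>x\<in>V. g' (g x) = x \<and> g (g' x) = x" using i by blast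
  qed
  obtain v0 where v0: "v0 \<in> V" using Vne by blast
  define N0 where "N0 = {u \<in> V. E v0 u}"
  have cN0: "card N0 = p" using val v0 by (simp add: valency_def N0_def)
  have nbr: "\<And>u. u \<in> V \<Longrightarrow> \<exists>w. E u w"
  proof -
    fix u assume "u \<in> V"
    then have "card {w \<in> V. E u w} = p" using val by (simp add: valency_def)
    then have "{w \<in> V. E u w} \<noteq> {}" using pr by (metis card.empty not_prime_0)
    then show "\<exists>w. E u w" by blast
  qed
  obtain w0 where w0: "E v0 w0" using nbr[OF v0] by blast
  have arcI: "\<And>x y. E x y \<Longrightarrow> (x, y) \<in> arcs V E" using Eprops by (simp add: arcs_def)
  have atr: "\<exists>g\<in>G. g x = x' \<and> g y = y'" if "E x y" "E x' y'" for x y x' y'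
  proof -
    have "\<exists>g\<in>G. g (fst (x,y)) = fst (x',y') \<and> g (snd (x,y)) = snd (x',y')"
      using at arcI[OF that(1)] arcI[OF that(2)] unfolding arc_transitive_def by blast
    then show ?thesis by simp
  qed
  have vt: "\<exists>g\<in>G. g v0 = u" if uV: "u \<in> V" for u
  proof -
    obtain w where "E u w" using nbr[OF uV] by blast
    then show ?thesis using atr[OF w0] by blast
  qed
  define S0 where "S0 = {g\<in>G. g v0 = v0}"
  have subS0: "subgroup S0 (BijGroup V)" using stab_subgroup[OF sub v0] S0_def by simp
  have S0G: "S0 \<subseteq> G" by (auto simp: S0_def)
  have orbN0: "{g w0 | g. g \<in> S0} = N0"
  proof
    show "{g w0 | g. g \<in> S0} \<subseteq> N0"
    proof
      fix u assume "u \<in> {g w0 | g. g \<in> S0}"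
      then obtain g where g: "g \<in> G" "g v0 = v0" "u = g w0" by (auto simp: S0_def)
      have w0V: "w0 \<in> V" using Eprops[OF w0] by blast
      have "E (g v0) (g w0)" using gE[OF g(1) v0 w0V] w0 by blast
      then show "u \<in> N0" using g gV[OF g(1) w0V] by (simp add: N0_def)
    qed
    show "N0 \<subseteq> {g w0 | g. g \<in> S0}"
    proof
      fix u assume "u \<in> N0"
      then have "E v0 u" by (simp add: N0_def)
      then obtain g where "g \<in> G" "g v0 = v0" "g w0 = u" using atr[OF w0] by blast
      then show "u \<in> {g w0 | g. g \<in> S0}" by (auto simp: S0_def)
    qed
  qed
  have w0V: "w0 \<in> V" using Eprops w0 by blast
  have cS0: "card S0 = p * card {g\<in>S0. g w0 = w0}"
    using perm_orbit_stab[OF subS0 w0V] orbN0 cN0 by simp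
  have finG: "finite G" using finite_subset[OF _ finite_Bij[OF finV]] GB by blast
  have finS0: "finite S0" using finite_subset[OF S0G finG] .
  have grpS0: "group (perm_group V S0)" using pg_group[OF subS0] .
  obtain P where P: "subgroup P (perm_group V S0)" "card P = p"
    using sylow_thm[OF pr grpS0, of 1 "card {g\<in>S0. g w0 = w0}"] cS0 finS0 by (auto simp: order_def)
  have subP: "subgroup P (BijGroup V)"
    using group.incl_subgroup[OF group_BijGroup subS0] P(1) by (simp add: perm_group_def)
  have PS0: "P \<subseteq> S0" using subgroup.subset[OF P(1)] by simp
  have PG: "P \<subseteq> G" using PS0 S0G by blast
  define psl where "psl = (\<forall>g\<in>G. \<exists>M. int p dvd (mdet M - 1) \<and> \<phi> g = mob p M)"
  have "\<forall>g\<in>G. \<exists>M. \<not> int p dvd mdet M \<and> \<phi> g = mob p M \<and> (psl \<longrightarrow> int p dvd (mdet M - 1))"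
  proof
    fix g assume g: "g \<in> G"
    show "\<exists>M. \<not> int p dvd mdet M \<and> \<phi> g = mob p M \<and> (psl \<longrightarrow> int p dvd (mdet M - 1))"
    proof (cases psl)
      case True
      then obtain M where M: "int p dvd (mdet M - 1)" "\<phi> g = mob p M" using g psl_def by blast
      have "\<not> int p dvd mdet M"
      proof
        assume "int p dvd mdet M"
        then have "int p dvd 1" using dvd_diff[OF _ M(1)] by fastforce
        then show False using pr by (simp add: prime_gt_1_nat)
      qed
      then show ?thesis using M True by blast
    next
      case False
      then show ?thesis using pmob g by blast
    qed
  qed
  then have "\<exists>f. \<forall>g\<in>G. \<not> int p dvd mdet (f g) \<and> \<phi> g = mob p (f g) \<and> (psl \<longrightarrow> int p dvd (mdet (f g) - 1))"
    by (rule bchoice)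
  then obtain mt where mt: "\<forall>g\<in>G. \<not> int p dvd mdet (mt g) \<and> \<phi> g = mob p (mt g) \<and> (psl \<longrightarrow> int p dvd (mdet (mt g) - 1))"
    by blast
  have mtu: "\<And>g. g \<in> G \<Longrightarrow> \<not> int p dvd mdet (mt g)" using mt by blast
  have mtm: "\<And>g. g \<in> G \<Longrightarrow> \<phi> g = mob p (mt g)" using mt by blast
  have \<phi>B: "\<And>g. g \<in> G \<Longrightarrow> \<phi> g \<in> Bij {0..p}" using mtm mtu mob_bij[OF pr] by simp
  obtain y0 where y0: "y0 \<le> p" "\<forall>g\<in>P. \<phi> g y0 = y0"
    using fixpt[OF pr subP P(2), of \<phi>] phom \<phi>B PG by blast
  have grpP: "group (perm_group V P)" using pg_group[OF subP] .
  obtain \<tau> where \<tau>: "\<tau> \<in> P" "\<tau> \<noteq> (\<lambda>x\<in>V. x)"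
  proof -
    have "\<not> P \<subseteq> {(\<lambda>x\<in>V. x)}"
    proof
      assume "P \<subseteq> {(\<lambda>x\<in>V. x)}"
      then have "card P \<le> card {(\<lambda>x\<in>V. x)}" by (intro card_mono) simp_all
      then have "card P \<le> 1" by simp
      then show False using P(2) p2 by simp
    qed
    then show ?thesis using that by blast
  qed
  have \<tau>S0: "\<tau> \<in> S0" using \<tau>(1) PS0 by blast
  have \<tau>G: "\<tau> \<in> G" using \<tau>S0 S0G by blast
  define tp where "tp n = \<tau> [^]\<^bsub>BijGroup V\<^esub> (n::nat)" for n
  have \<tau>pow: "tp p = (\<lambda>x\<in>V. x)"
  proof -
    have "\<tau> [^]\<^bsub>perm_group V P\<^esub> order (perm_group V P) = \<one>\<^bsub>perm_group V P\<^esub>"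
      using group.pow_order_eq_1[OF grpP] \<tau>(1) by simp
    then show ?thesis using P(2) by (simp add: tp_def pg_pow pg_one order_def)
  qed
  have tpB: "\<And>n. tp n \<in> Bij V"
    using monoid.nat_pow_closed[OF group.is_monoid[OF group_BijGroup]] GB[OF \<tau>G] by (simp add: tp_def BijGroup_def)
  have tp0: "tp 0 = (\<lambda>x\<in>V. x)" by (simp add: tp_def BijGroup_def)
  have tpS: "\<And>n. tp (Suc n) = compose V (tp n) \<tau>"
    using tpB GB[OF \<tau>G] by (simp add: tp_def bij_mult)
  have closS0: "compose V g h \<in> S0" if gh: "g \<in> S0" "h \<in> S0" for g h
  proof -
    have "g \<otimes>\<^bsub>BijGroup V\<^esub> h \<in> S0" by (rule subgroup.m_closed[OF subS0 gh])
    then show ?thesis using bij_mult[OF sub_Bij[OF subS0 gh(1)] sub_Bij[OF subS0 gh(2)]] by simp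
  qed
  have oneS0: "(\<lambda>x\<in>V. x) \<in> S0" using oneG v0 by (simp add: S0_def)
  have tpS0: "\<And>n. tp n \<in> S0"
  proof -
    fix n show "tp n \<in> S0"
    proof (induction n)
      case 0 show ?case unfolding tp0 by (rule oneS0)
    next
      case (Suc n) show ?case unfolding tpS by (rule closS0[OF Suc \<tau>S0])
    qed
  qed
  have tpG: "\<And>n. tp n \<in> G" using tpS0 S0G by blast
  obtain R Ra where RR: "mmul R Ra = (1,0,0,1)" "mmul Ra R = (1,0,0,1)" "mdet R = 1" "mdet Ra = 1" "mob p R y0 = p"
  proof (cases "y0 = p")
    case True
    show ?thesis by (rule that[of "(1,0,0,1)" "(1,0,0,1)"]) (simp_all add: True mob_fix_inf[OF pr])
  next
    case False
    have "mob p (0,-1,1,-int y0) y0 = p" using False y0(1) by (simp add: mob_def hcoord_def pt_def)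
    then show ?thesis by (intro that[of "(0,-1,1,-int y0)" "(-int y0,1,-1,0)"]) simp_all
  qed
  have RaR: "\<And>X. mmul Ra (mmul R X) = X" using RR(2) by (simp add: mmul_assoc[symmetric])
  have RRa: "\<And>X. mmul R (mmul Ra X) = X" using RR(1) by (simp add: mmul_assoc[symmetric])
  have uR: "\<not> int p dvd mdet R" "\<not> int p dvd mdet Ra" using RR(3,4) p2 by simp_all
  define M\<psi> where "M\<psi> g = mmul R (mmul (mt g) Ra)" for g
  define \<psi> where "\<psi> g = mob p (M\<psi> g)" for g
  have d\<psi>: "\<And>g. mdet (M\<psi> g) = mdet (mt g)" using RR(3,4) by (simp add: M\<psi>_def mdet_mmul)
  have u\<psi>: "\<And>g. g \<in> G \<Longrightarrow> \<not> int p dvd mdet (M\<psi> g)" using d\<psi> mtu by simp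
  have \<psi>B: "\<And>g. g \<in> G \<Longrightarrow> \<psi> g \<in> Bij {0..p}" using u\<psi> mob_bij[OF pr] by (simp add: \<psi>_def)
  have \<psi>hom: "\<And>g h. g \<in> G \<Longrightarrow> h \<in> G \<Longrightarrow> \<psi> (compose V g h) = compose {0..p} (\<psi> g) (\<psi> h)"
  proof -
    fix g h assume g: "g \<in> G" and h: "h \<in> G"
    have gh: "compose V g h \<in> G" using clos[OF g h] .
    have e: "mob p (mt (compose V g h)) = mob p (mmul (mt g) (mt h))"
    proof -
      have "\<phi> (compose V g h) = compose {0..p} (\<phi> g) (\<phi> h)" using phom g h by blast
      then show ?thesis using mtm[OF g] mtm[OF h] mtm[OF gh] mob_comp[OF pr mtu[OF g] mtu[OF h]] by simp
    qed
    have ud: "\<not> int p dvd mdet (mmul (mt g) (mt h))" by (simp add: mdet_mmul unit_mult[OF pr mtu[OF g] mtu[OF h]])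
    have 1: "\<psi> (compose V g h) = mob p (mmul R (mmul (mmul (mt g) (mt h)) Ra))"
      unfolding \<psi>_def M\<psi>_def by (rule mob_sandwich[OF pr uR(1) mtu[OF gh] ud uR(2) e])
    have 2: "compose {0..p} (\<psi> g) (\<psi> h) = mob p (mmul (M\<psi> g) (M\<psi> h))"
      unfolding \<psi>_def using mob_comp[OF pr u\<psi>[OF g] u\<psi>[OF h]] .
    have 3: "mmul (M\<psi> g) (M\<psi> h) = mmul R (mmul (mmul (mt g) (mt h)) Ra)"
      by (simp add: M\<psi>_def mmul_assoc RaR)
    show "\<psi> (compose V g h) = compose {0..p} (\<psi> g) (\<psi> h)" using 1 2 3 by simp
  qed
  have \<psi>inj: "\<And>g h. g \<in> G \<Longrightarrow> h \<in> G \<Longrightarrow> \<psi> g = \<psi> h \<Longrightarrow> g = h"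
  proof -
    fix g h assume g: "g \<in> G" and h: "h \<in> G" and e: "\<psi> g = \<psi> h"
    have bk: "\<And>k. mmul Ra (mmul (M\<psi> k) R) = mt k" by (simp add: M\<psi>_def mmul_assoc RaR RR(2))
    have "mob p (mmul Ra (mmul (M\<psi> g) R)) = mob p (mmul Ra (mmul (M\<psi> h) R))"
      by (rule mob_sandwich[OF pr uR(2) u\<psi>[OF g] u\<psi>[OF h] uR(1)]) (use e in \<open>simp add: \<psi>_def\<close>)
    then have "\<phi> g = \<phi> h" using bk mtm g h by simp
    then show "g = h" using pinj g h by (simp add: inj_on_def)
  qed
  have cone: "compose V (\<lambda>x\<in>V. x) (\<lambda>x\<in>V. x) = (\<lambda>x\<in>V. x)" by (rule ext) (simp add: compose_def)
  have \<psi>one: "\<psi> (\<lambda>x\<in>V. x) = (\<lambda>z\<in>{0..p}. z)"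
    using \<psi>hom[OF oneG oneG] cone mob_idem[OF pr u\<psi>[OF oneG]] by (simp add: \<psi>_def)
  have \<psi>id: "\<And>g. g \<in> G \<Longrightarrow> \<psi> g = (\<lambda>z\<in>{0..p}. z) \<Longrightarrow> g = (\<lambda>x\<in>V. x)"
  proof -
    fix g assume "g \<in> G" "\<psi> g = (\<lambda>z\<in>{0..p}. z)"
    then show "g = (\<lambda>x\<in>V. x)" using \<psi>inj[OF _ oneG] \<psi>one by simp
  qed
  have \<psi>app: "\<And>g h z. g \<in> G \<Longrightarrow> h \<in> G \<Longrightarrow> z \<le> p \<Longrightarrow> \<psi> (compose V g h) z = \<psi> g (\<psi> h z)"
    using \<psi>hom by (simp add: compose_def)
  have \<psi>le: "\<And>g z. g \<in> G \<Longrightarrow> z \<le> p \<Longrightarrow> \<psi> g z \<le> p" using mob_le[OF pr] by (simp add: \<psi>_def)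
  have \<psi>\<tau>p: "\<psi> \<tau> p = p"
  proof -
    have "\<psi> \<tau> = compose {0..p} (mob p R) (compose {0..p} (mob p (mt \<tau>)) (mob p Ra))"
      using mob_comp[OF pr mtu[OF \<tau>G] uR(2)] mob_comp[OF pr uR(1), of "mmul (mt \<tau>) Ra"]
        mtu[OF \<tau>G] uR unit_mult[OF pr] by (simp add: \<psi>_def M\<psi>_def mdet_mmul)
    moreover have "mob p Ra p = y0"
    proof -
      have "compose {0..p} (mob p Ra) (mob p R) y0 = mob p (1,0,0,1) y0"
        using mob_comp[OF pr uR(2) uR(1)] RR(2) by simp
      moreover have "mob p (1,0,0,1) = (\<lambda>z\<in>{0..p}. z)" using mob_id[OF pr, of 1] p2 by simp
      ultimately show ?thesis using RR(5) y0(1) by (simp add: compose_def)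
    qed
    moreover have fx: "mob p (mt \<tau>) y0 = y0" using y0(2) \<tau>(1) mtm[OF \<tau>G] by force
    ultimately show ?thesis using y0(1) RR(5) by (simp add: compose_def)
  qed
  have \<psi>tpT: "\<psi> (tp n) = mob p (mpow T n)" if T: "\<psi> \<tau> = mob p T" "\<not> int p dvd mdet T" for T n
  proof (induction n)
    case 0
    have "\<psi> (tp 0) = (\<lambda>z\<in>{0..p}. z)" using \<psi>one tp0 by simp
    then show ?case using mob_id[OF pr, of 1] p2 by simp
  next
    case (Suc n)
    have "\<psi> (tp (Suc n)) = compose {0..p} (\<psi> (tp n)) (\<psi> \<tau>)" using \<psi>hom[OF tpG \<tau>G] tpS by simp
    also have "\<dots> = mob p (mmul (mpow T n) T)"
      using Suc T mob_comp[OF pr _ T(2), of "mpow T n"] unit_pow[OF pr T(2)] by (simp add: mdet_mpow)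
    finally show ?case by simp
  qed
  obtain a b c d where M\<tau>: "M\<psi> \<tau> = (a,b,c,d)" by (cases "M\<psi> \<tau>") auto
  have cdiv: "int p dvd c" using \<psi>\<tau>p M\<tau> mob_fix_inf[OF pr] by (simp add: \<psi>_def)
  have u\<tau>: "\<not> int p dvd (a*d - b*c)" using u\<psi>[OF \<tau>G] M\<tau> by simp
  have uad: "\<not> int p dvd (a*d)"
  proof
    assume "int p dvd (a*d)"
    moreover have "int p dvd (b*c)" using cdiv by simp
    ultimately have "int p dvd (a*d - b*c)" by (rule dvd_diff)
    then show False using u\<tau> by simp
  qed
  have ua: "\<not> int p dvd a" "\<not> int p dvd d" using uad by auto
  have \<psi>\<tau>1: "\<psi> \<tau> = mob p (a,b,0,d)"
    unfolding \<psi>_def M\<tau> by (rule mob_cong[OF pr]) (use u\<tau> uad cdiv in simp_all)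
  have e1: "mob p (mpow (a,b,0,d) p) = (\<lambda>z\<in>{0..p}. z)"
    using \<psi>tpT[OF \<psi>\<tau>1, of p] uad \<tau>pow \<psi>one by simp
  obtain x where mx: "mpow (a,b,0,d) p = (a^p, x, 0, d^p)" using mpow_tri by blast
  have e2: "\<not> int p dvd mdet (a^p, x, 0, d^p)"
    using unit_pow[OF pr uad, of p] by (simp add: power_mult_distrib)
  have e3: "mob p (a^p, x, 0, d^p) = (\<lambda>z\<in>{0..p}. z)" using e1 mx by simp
  have "int p dvd (a^p - d^p)" using mob_eq_id[OF pr e2 e3] by blast
  then have adiv: "int p dvd (a - d)"
  proof -
    assume h: "int p dvd (a^p - d^p)"
    have "a - d = (a^p - d^p) - (a^p - a) + (d^p - d)" by simp
    moreover have "int p dvd ((a^p - d^p) - (a^p - a) + (d^p - d))"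
      by (rule dvd_add[OF dvd_diff[OF h fermat_int[OF pr, of a]] fermat_int[OF pr, of d]])
    ultimately show ?thesis by simp
  qed
  define \<beta> where "\<beta> = b * minv p a"
  have \<psi>\<tau>: "\<psi> \<tau> = mob p (1,\<beta>,0,1)"
  proof -
    have m: "int p dvd (a * minv p a - 1)" using minv[OF pr ua(1)] .
    have "b - a * \<beta> = - (b * (a * minv p a - 1))" by (simp add: \<beta>_def algebra_simps)
    then have "int p dvd (b - a * \<beta>)" using dvd_mult[OF m, of b] by simp
    moreover have "int p dvd (d - a * 1)" using adiv by (subst dvd_diff_commute) simp
    ultimately have "mob p (a,b,0,d) = mob p (1,\<beta>,0,1)"
      using mob_scale_cong[OF pr, of "(a,b,0,d)" "(1,\<beta>,0,1)" a] uad p2 by simp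
    then show ?thesis using \<psi>\<tau>1 by simp
  qed
  have u1: "\<not> int p dvd mdet (1,\<beta>,0,1)" using p2 by simp
  have \<psi>tp: "\<And>n. \<psi> (tp n) = mob p (1, int n * \<beta>, 0, 1)"
    using \<psi>tpT[OF \<psi>\<tau> u1] by (simp add: mpow_transl)
  have u\<beta>: "\<not> int p dvd \<beta>"
  proof
    assume "int p dvd \<beta>"
    then have "\<psi> \<tau> = mob p (1,0,0,1)" unfolding \<psi>\<tau> by (intro mob_cong[OF pr]) (use p2 in simp_all)
    then have "\<psi> \<tau> = (\<lambda>z\<in>{0..p}. z)" using mob_id[OF pr, of 1] p2 by simp
    then show False using \<psi>id[OF \<tau>G] \<tau>(2) by simp
  qed
  have tr_any: "\<exists>n. \<psi> (tp n) = mob p (1,e,0,1)" for e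
  proof -
    define n where "n = nat ((e * minv p \<beta>) mod int p)"
    have n: "int n = (e * minv p \<beta>) mod int p" using pr by (simp add: n_def prime_gt_0_nat)
    have "int p dvd (int n - e * minv p \<beta>)" unfolding n by (simp add: mod_eq_dvd_iff[symmetric])
    then have "int p dvd ((int n - e * minv p \<beta>) * \<beta> + e * (\<beta> * minv p \<beta> - 1))"
      by (rule dvd_add[OF dvd_mult2 dvd_mult[OF minv[OF pr u\<beta>]]])
    then have "int p dvd (int n * \<beta> - e)" by (simp add: algebra_simps)
    then have "mob p (1, int n * \<beta>, 0, 1) = mob p (1,e,0,1)" by (intro mob_cong[OF pr]) (use p2 in simp_all)
    then have "\<psi> (tp n) = mob p (1,e,0,1)" using \<psi>tp[of n] by simp
    then show ?thesis by blast
  qed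
  have \<psi>T: "\<And>n z. z \<le> p \<Longrightarrow> \<psi> (tp n) z = (if z = p then p else nat ((int z + int n * \<beta>) mod int p))"
    using \<psi>tp mob_transl[OF pr] by simp
  have ex_x: "\<exists>x\<in>G. E v0 (x v0) \<and> \<psi> x p \<noteq> p"
  proof (rule ccontr)
    assume H: "\<not> (\<exists>x\<in>G. E v0 (x v0) \<and> \<psi> x p \<noteq> p)"
    have H0: "\<And>x. x \<in> G \<Longrightarrow> E v0 (x v0) \<Longrightarrow> \<psi> x p = p" using H by blast
    have allu: "\<exists>g\<in>G. g v0 = u \<and> \<psi> g p = p" if uV: "u \<in> V" for u
    proof -
      have "(v0, u) \<in> {(x, y). x \<in> V \<and> y \<in> V \<and> E x y}\<^sup>*" using conn v0 uV by (simp add: graph_connected_def)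
      then show ?thesis
      proof (induction rule: rtrancl_induct)
        case base
        have "\<psi> (\<lambda>x\<in>V. x) p = p" using \<psi>one by simp
        moreover have "(\<lambda>x\<in>V. x) v0 = v0" using v0 by simp
        ultimately show ?case using oneG by blast
      next
        case (step u u')
        from step.hyps(2) have uu': "u \<in> V" "u' \<in> V" "E u u'" by auto
        from step.IH obtain gu where gu: "gu \<in> G" "gu v0 = u" "\<psi> gu p = p" by blast
        obtain z where z: "z \<in> G" "z v0 = u'" using vt[OF uu'(2)] by blast
        obtain gi where gi: "gi \<in> G" "\<forall>x\<in>V. gi (gu x) = x \<and> gu (gi x) = x" using invG[OF gu(1)] by blast
        define xx where "xx = compose V gi z"
        have xxG: "xx \<in> G" using clos[OF gi(1) z(1)] xx_def by simp
        have 1: "xx v0 = gi u'" using z v0 by (simp add: xx_def compose_def)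
        have 2: "E (gi u) (gi u')" using gE[OF gi(1) uu'(1) uu'(2)] uu'(3) by blast
        have 3: "gi u = v0" using gi(2) v0 gu(2) by force
        have "E v0 (xx v0)" using 1 2 3 by simp
        then have xxp: "\<psi> xx p = p" using H0 xxG by blast
        have zeq: "z = compose V gu xx"
        proof (rule extG[OF z(1) clos[OF gu(1) xxG]], rule ballI)
          fix y assume yV: "y \<in> V"
          have "z y \<in> V" using gV[OF z(1) yV] .
          then show "z y = compose V gu xx y" using gi(2) yV by (simp add: xx_def compose_def)
        qed
        have "\<psi> z p = \<psi> gu (\<psi> xx p)" using \<psi>app[OF gu(1) xxG, of p] zeq by simp
        then have "\<psi> z p = p" using xxp gu(3) by simp
        then show ?case using z by blast
      qed
    qed
    have fixall: "\<forall>u\<in>V. \<tau> u = u"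
    proof
      fix u assume uV: "u \<in> V"
      obtain g where g: "g \<in> G" "g v0 = u" "\<psi> g p = p" using allu[OF uV] by blast
      obtain a' b' c' d' where Mg: "M\<psi> g = (a',b',c',d')" by (cases "M\<psi> g") auto
      have c': "int p dvd c'" using g(3) Mg mob_fix_inf[OF pr] by (simp add: \<psi>_def)
      have ug: "\<not> int p dvd (a'*d' - b'*c')" using u\<psi>[OF g(1)] Mg by simp
      have ua': "\<not> int p dvd a'"
      proof
        assume "int p dvd a'"
        then have "int p dvd (a'*d' - b'*c')" using c' by simp
        then show False using ug by simp
      qed
      define j where "j = nat ((d' * minv p a') mod int p)"
      have j: "int j = (d' * minv p a') mod int p" using pr by (simp add: j_def prime_gt_0_nat)
      have "int p dvd (int j - d' * minv p a')" unfolding j by (simp add: mod_eq_dvd_iff[symmetric])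
      then have "int p dvd (a' * (int j - d' * minv p a') + d' * (a' * minv p a' - 1))"
        by (rule dvd_add[OF dvd_mult dvd_mult[OF minv[OF pr ua']]])
      then have ja: "int p dvd (a' * int j - d')" by (simp add: algebra_simps)
      have tjG: "tp j \<in> G" using tpG .
      have L: "\<psi> (compose V \<tau> g) = mob p (a' + \<beta>*c', b' + \<beta>*d', c', d')"
        using \<psi>hom[OF \<tau>G g(1)] \<psi>\<tau> mob_comp[OF pr u1 u\<psi>[OF g(1)]] Mg by (simp add: \<psi>_def)
      have R: "\<psi> (compose V g (tp j)) = mob p (a', a'*(int j*\<beta>) + b', c', c'*(int j*\<beta>) + d')"
      proof -
        have u1j: "\<not> int p dvd mdet (1, int j*\<beta>, 0, 1)" using p2 by simp
        show ?thesis using \<psi>hom[OF g(1) tjG] \<psi>tp[of j] mob_comp[OF pr u\<psi>[OF g(1)] u1j] Mg by (simp add: \<psi>_def)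
      qed
      have uL: "\<not> int p dvd mdet (a' + \<beta>*c', b' + \<beta>*d', c', d')" using ug by (simp add: algebra_simps)
      have uR: "\<not> int p dvd mdet (a', a'*(int j*\<beta>) + b', c', c'*(int j*\<beta>) + d')" using ug by (simp add: algebra_simps)
      have "mob p (a' + \<beta>*c', b' + \<beta>*d', c', d') = mob p (a', a'*(int j*\<beta>) + b', c', c'*(int j*\<beta>) + d')"
        apply (rule mob_cong[OF pr uL uR])
        subgoal using dvd_mult[OF c', of \<beta>] by (simp add: algebra_simps)
        subgoal using dvd_mult[OF ja, of \<beta>] by (subst dvd_diff_commute) (simp add: algebra_simps)
        subgoal by simp
        subgoal using dvd_mult2[OF c', of "int j * \<beta>"] by (simp add: algebra_simps)
        done
      then have "\<psi> (compose V \<tau> g) = \<psi> (compose V g (tp j))" using L R by simp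
      then have ceq: "compose V \<tau> g = compose V g (tp j)" using \<psi>inj[OF clos[OF \<tau>G g(1)] clos[OF g(1) tjG]] by blast
      have "tp j v0 = v0" using tpS0[of j] by (simp add: S0_def)
      then have "compose V g (tp j) v0 = u" using g(2) v0 by (simp add: compose_def)
      moreover have "compose V \<tau> g v0 = \<tau> u" using g(2) v0 by (simp add: compose_def)
      ultimately show "\<tau> u = u" using ceq by simp
    qed
    then have "\<tau> = (\<lambda>x\<in>V. x)" using extG[OF \<tau>G oneG] by simp
    then show False using \<tau>(2) by simp
  qed
  obtain x where x: "x \<in> G" "E v0 (x v0)" "\<psi> x p \<noteq> p" using ex_x by blast
  obtain a2 b2 c2 d2 where Mx: "M\<psi> x = (a2,b2,c2,d2)" by (cases "M\<psi> x") auto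
  have c2: "\<not> int p dvd c2" using x(3) Mx mob_fix_inf[OF pr] by (simp add: \<psi>_def)
  define \<Delta> where "\<Delta> = mdet (M\<psi> x)"
  have u\<Delta>: "\<not> int p dvd \<Delta>" using u\<psi>[OF x(1)] \<Delta>_def by simp
  have exA: "\<exists>A\<in>S0. \<exists>\<alpha> \<beta>' \<delta> w. \<psi> A = mob p (\<alpha>,\<beta>',0,\<delta>) \<and> \<not> int p dvd (\<alpha>*\<delta>) \<and> int p dvd (w^2 - \<alpha>*\<delta>*\<Delta>)"
  proof (cases psl)
    case True
    have "int p dvd (mdet (mt x) - 1)" using mt x(1) True by blast
    then have d1: "int p dvd (1^2 - 1*1*\<Delta>)" using d\<psi> \<Delta>_def by (subst dvd_diff_commute) simp
    have "\<psi> (\<lambda>x\<in>V. x) = mob p (1,0,0,1)" using \<psi>one mob_id[OF pr, of 1] p2 by simp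
    moreover have "\<not> int p dvd (1*1)" using p2 by simp
    ultimately show ?thesis using oneS0 d1 by blast
  next
    case False
    have cs2: "p mod 4 = 3 \<and> (\<forall>v\<in>V. even (card {g\<in>G. g v = v}) \<and> card {g\<in>G. g v = v} < p^2)"
      using cs False unfolding psl_def by blast
    then have p4: "p mod 4 = 3" and ev: "even (card S0)" and lt: "card S0 < p^2"
      using v0 unfolding S0_def by blast+
    have one1: "\<psi> (\<lambda>x\<in>V. x) = mob p (1,0,0,1)" using \<psi>one mob_id[OF pr, of 1] p2 by simp
    have u11: "\<not> int p dvd (1*1)" using p2 by simp
    from legendre_case[OF pr p4 u\<Delta>] show ?thesis
    proof
      assume "\<exists>w. int p dvd (w^2 - \<Delta>)"
      then obtain w where "int p dvd (w^2 - 1*1*\<Delta>)" by auto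
      then show ?thesis using oneS0 one1 u11 by blast
    next
      assume "\<exists>w. int p dvd (w^2 + \<Delta>)"
      then obtain w' where w': "int p dvd (w'^2 + \<Delta>)" by blast
      obtain Q where Q: "subgroup Q (perm_group V S0)" "card Q = 2"
        using sylow_thm[OF two_is_prime_nat grpS0, of 1 "card S0 div 2"] ev finS0 by (auto simp: order_def)
      have subQ: "subgroup Q (BijGroup V)"
        using group.incl_subgroup[OF group_BijGroup subS0] Q(1) by (simp add: perm_group_def)
      have QS0: "Q \<subseteq> S0" using subgroup.subset[OF Q(1)] by simp
      have grpQ: "group (perm_group V Q)" using pg_group[OF subQ] .
      obtain h where h: "h \<in> Q" "h \<noteq> (\<lambda>x\<in>V. x)"
      proof -
        have "\<not> Q \<subseteq> {(\<lambda>x\<in>V. x)}"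
        proof
          assume "Q \<subseteq> {(\<lambda>x\<in>V. x)}"
          then have "card Q \<le> card {(\<lambda>x\<in>V. x)}" by (intro card_mono) simp_all
          then show False using Q(2) by simp
        qed
        then show ?thesis using that by blast
      qed
      have hS0: "h \<in> S0" using h(1) QS0 by blast
      have hG: "h \<in> G" using hS0 S0G by blast
      have hB: "h \<in> Bij V" using GB[OF hG] .
      have "h [^]\<^bsub>perm_group V Q\<^esub> order (perm_group V Q) = \<one>\<^bsub>perm_group V Q\<^esub>"
        using group.pow_order_eq_1[OF grpQ] h(1) by simp
      then have "h [^]\<^bsub>perm_group V Q\<^esub> (Suc (Suc 0)) = \<one>\<^bsub>perm_group V Q\<^esub>" using Q(2) by (simp add: order_def numeral_2_eq_2)
      moreover have "h [^]\<^bsub>perm_group V Q\<^esub> (Suc (Suc 0)) = h \<otimes>\<^bsub>perm_group V Q\<^esub> h"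
        using monoid.nat_pow_Suc[OF group.is_monoid[OF grpQ]] monoid.l_one[OF group.is_monoid[OF grpQ]] h(1)
        by simp
      ultimately have "h \<otimes>\<^bsub>perm_group V Q\<^esub> h = \<one>\<^bsub>perm_group V Q\<^esub>" by simp
      then have hh: "compose V h h = (\<lambda>x\<in>V. x)"
        unfolding pg_mult[OF subQ h(1) h(1)] pg_one .
      have \<psi>hh: "compose {0..p} (\<psi> h) (\<psi> h) = (\<lambda>z\<in>{0..p}. z)" using \<psi>hom[OF hG hG] hh \<psi>one by simp
      obtain a1 b1 c1 d1 where Mh: "M\<psi> h = (a1,b1,c1,d1)" by (cases "M\<psi> h") auto
      have uh: "\<not> int p dvd (a1*d1 - b1*c1)" using u\<psi>[OF hG] Mh by simp
      show ?thesis
      proof (cases "int p dvd c1")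
        case True
        have uad1: "\<not> int p dvd (a1*d1)"
        proof
          assume "int p dvd (a1*d1)"
          then have "int p dvd (a1*d1 - b1*c1)" using True by simp
          then show False using uh by simp
        qed
        have \<psi>h: "\<psi> h = mob p (a1,b1,0,d1)"
          unfolding \<psi>_def Mh by (rule mob_cong[OF pr]) (use uh uad1 True in simp_all)
        have uh0: "\<not> int p dvd mdet (a1,b1,0,d1)" using uad1 by simp
        have q1: "mob p (mmul (a1,b1,0,d1) (a1,b1,0,d1)) = (\<lambda>z\<in>{0..p}. z)"
          using \<psi>hh \<psi>h mob_comp[OF pr uh0 uh0] by simp
        have q2: "mmul (a1,b1,0,d1) (a1,b1,0,d1) = (a1*a1, b1*(a1+d1), 0, d1*d1)" by (simp add: algebra_simps)
        have q3: "\<not> int p dvd mdet (a1*a1, b1*(a1+d1), 0, d1*d1)" using unit_mult[OF pr uad1 uad1] by (simp add: algebra_simps)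
        have q4: "mob p (a1*a1, b1*(a1+d1), 0, d1*d1) = (\<lambda>z\<in>{0..p}. z)" using q1 q2 by simp
        have sq: "int p dvd (b1*(a1+d1))" "int p dvd (a1*a1 - d1*d1)" using mob_eq_id[OF pr q3 q4] by simp_all
        show ?thesis
        proof (cases "int p dvd (a1 + d1)")
          case True
          have eq: "(a1*w')^2 - a1*d1*\<Delta> = a1^2 * (w'^2 + \<Delta>) - a1*\<Delta>*(a1 + d1)" by (simp add: algebra_simps power2_eq_square)
          have dv: "int p dvd (a1^2 * (w'^2 + \<Delta>) - a1*\<Delta>*(a1 + d1))"
            by (rule dvd_diff[OF dvd_mult[OF w'] dvd_mult[OF True]])
          have "int p dvd ((a1*w')^2 - a1*d1*\<Delta>)" unfolding eq by (rule dv)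
          then show ?thesis using hS0 \<psi>h uad1 by blast
        next
          case False
          have b1: "int p dvd b1" using sq(1) False pdvd_mult[OF pr] by blast
          have "a1*a1 - d1*d1 = (a1 - d1)*(a1 + d1)" by (simp add: algebra_simps)
          then have "int p dvd ((a1 - d1)*(a1 + d1))" using sq(2) by simp
          then have ad: "int p dvd (a1 - d1)" using False pdvd_mult[OF pr] by blast
          have "mob p (a1,b1,0,d1) = mob p (1,0,0,1)"
            apply (rule mob_scale_cong[where l=a1, OF pr uh0])
            using p2 b1 ad by (simp_all add: dvd_diff_commute[of _ d1])
          then have "\<psi> h = (\<lambda>z\<in>{0..p}. z)" using \<psi>h mob_id[OF pr, of 1] p2 by simp
          then show ?thesis using \<psi>id[OF hG] h(2) by simp
        qed
      next
        case False
        define y1 where "y1 = \<psi> h p"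
        have y1le: "y1 \<le> p" using \<psi>le[OF hG, of p] y1_def by simp
        have y1ne: "y1 \<noteq> p" using False Mh mob_fix_inf[OF pr] by (simp add: y1_def \<psi>_def)
        have qq: "\<psi> h (\<psi> h z) = z" if zp: "z \<le> p" for z
          using fun_cong[OF \<psi>hh, of z] zp by (simp add: compose_def)
        have qy1: "\<psi> h y1 = p" using qq[of p] y1_def by simp
        have Tfin: "\<psi> (tp n) z \<noteq> p" if zp: "z < p" for n z
        proof -
          have "(int z + int n * \<beta>) mod int p < int p" "(int z + int n * \<beta>) mod int p \<ge> 0"
            using pr by (simp_all add: prime_gt_0_nat)
          then have "nat ((int z + int n * \<beta>) mod int p) < p" by (simp add: nat_less_iff)
          then show ?thesis using \<psi>T[of z n] zp by simp
        qed
        have Tval: "int (\<psi> (tp n) z) = (int z + int n * \<beta>) mod int p" if zp: "z < p" for n z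
          using \<psi>T[of z n] zp pr by (simp add: prime_gt_0_nat)
        have qle: "\<psi> h z \<le> p" if zp: "z \<le> p" for z using \<psi>le[OF hG zp] .
        have Tle: "\<psi> (tp n) z \<le> p" if zp: "z \<le> p" for n z using \<psi>le[OF tpG zp] .
        define F where "F ij = compose V (tp (fst ij)) (compose V h (compose V (tp (snd ij)) h))" for ij
        have FS0: "F ij \<in> S0" for ij using closS0 tpS0 hS0 by (simp add: F_def)
        have \<psi>F: "\<psi> (F (i,j)) z = \<psi> (tp i) (\<psi> h (\<psi> (tp j) (\<psi> h z)))" if zp: "z \<le> p" for i j z
        proof -
          have g1: "compose V (tp j) h \<in> G" using clos[OF tpG hG] .
          have g2: "compose V h (compose V (tp j) h) \<in> G" using clos[OF hG g1] .
          show ?thesis using \<psi>app[OF tpG g2 zp] \<psi>app[OF hG g1 zp] \<psi>app[OF tpG hG zp] by (simp add: F_def)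
        qed
        have injF: "inj_on F ({..<p} \<times> {..<p})"
        proof (rule inj_onI)
          fix ij ij' assume ijin: "ij \<in> {..<p} \<times> {..<p}" and ij'in: "ij' \<in> {..<p} \<times> {..<p}" and eq: "F ij = F ij'"
          obtain i j where ij: "ij = (i,j)" by (cases ij) auto
          obtain i' j' where ij': "ij' = (i',j')" by (cases ij') auto
          have ip: "i < p" "j < p" "i' < p" "j' < p" using ijin ij'in ij ij' by auto
          define u where "u = nat ((int y1 - int j * \<beta>) mod int p)"
          have ui: "int u = (int y1 - int j * \<beta>) mod int p" using pr by (simp add: u_def prime_gt_0_nat)
          have ulp: "u < p" using ui pr by (metis of_nat_less_iff prime_gt_0_nat of_nat_0_less_iff pos_mod_bound)
          have "int (\<psi> (tp j) u) = (int u + int j * \<beta>) mod int p" using Tval[OF ulp] .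
          also have "\<dots> = (int y1 - int j * \<beta> + int j * \<beta>) mod int p" unfolding ui by (simp add: mod_add_left_eq)
          also have "\<dots> = int y1" using y1le y1ne by simp
          finally have Tju: "\<psi> (tp j) u = y1" by simp
          have qu: "\<psi> h u \<le> p" using qle ulp by simp
          have "\<psi> (F (i,j)) (\<psi> h u) = p"
            using \<psi>F[OF qu] qq[of u] ulp Tju qy1 \<psi>T by simp
          then have "\<psi> (F (i',j')) (\<psi> h u) = p" using eq ij ij' by simp
          then have A1: "\<psi> (tp i') (\<psi> h (\<psi> (tp j') u)) = p" using \<psi>F[OF qu] qq[of u] ulp by simp
          have A2: "\<psi> h (\<psi> (tp j') u) = p"
          proof (rule ccontr)
            assume "\<psi> h (\<psi> (tp j') u) \<noteq> p"
            moreover have "\<psi> h (\<psi> (tp j') u) \<le> p" using qle Tle ulp by simp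
            ultimately have "\<psi> h (\<psi> (tp j') u) < p" by simp
            then have "\<psi> (tp i') (\<psi> h (\<psi> (tp j') u)) \<noteq> p" by (rule Tfin)
            then show False using A1 by simp
          qed
          have "\<psi> (tp j') u = y1" using qq[OF Tle[of u j']] ulp A2 y1_def by simp
          then have "int (\<psi> (tp j') u) = int (\<psi> (tp j) u)" using Tju by simp
          then have "(int u + int j' * \<beta>) mod int p = (int u + int j * \<beta>) mod int p" using Tval[OF ulp] by simp
          then have "int p dvd ((int u + int j' * \<beta>) - (int u + int j * \<beta>))" by (simp add: mod_eq_dvd_iff)
          then have "int p dvd ((int j' - int j) * \<beta>)" by (simp add: algebra_simps)
          then have jj: "j' = j" using small_eq[OF pr ip(4) ip(2) u\<beta>] by blast
          define Z where "Z = compose V h (compose V (tp j) h)"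
          have ZG: "Z \<in> G" using clos[OF hG clos[OF tpG hG]] Z_def by simp
          obtain Z' where Z': "Z' \<in> G" "\<forall>x\<in>V. Z' (Z x) = x \<and> Z (Z' x) = x" using invG[OF ZG] by blast
          have "tp i = tp i'"
          proof (rule extG[OF tpG tpG], rule ballI)
            fix y assume yV: "y \<in> V"
            have Z'y: "Z' y \<in> V" using gV[OF Z'(1) yV] .
            have "F (i,j) (Z' y) = F (i',j') (Z' y)" using eq ij ij' by simp
            then have "tp i (Z (Z' y)) = tp i' (Z (Z' y))" using Z'y jj by (simp add: F_def Z_def compose_def)
            then show "tp i y = tp i' y" using Z'(2) yV by simp
          qed
          then have "int (\<psi> (tp i) 0) = int (\<psi> (tp i') 0)" by simp
          then have "(int i * \<beta>) mod int p = (int i' * \<beta>) mod int p" using Tval[of 0] pr by (simp add: prime_gt_0_nat)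
          then have "int p dvd ((int i - int i') * \<beta>)" by (simp add: mod_eq_dvd_iff algebra_simps)
          then have "i = i'" using small_eq[OF pr ip(1) ip(3) u\<beta>] by blast
          then show "ij = ij'" using ij ij' jj by simp
        qed
        have "card (F ` ({..<p} \<times> {..<p})) = p^2" using card_image[OF injF] by (simp add: power2_eq_square)
        moreover have "F ` ({..<p} \<times> {..<p}) \<subseteq> S0" using FS0 by blast
        ultimately have "p^2 \<le> card S0" using card_mono[OF finS0, of "F ` ({..<p} \<times> {..<p})"] by simp
        then show ?thesis using lt by simp
      qed
    qed
  qed
  then obtain A \<alpha> \<beta>' \<delta> w where A: "A \<in> S0" "\<psi> A = mob p (\<alpha>,\<beta>',0,\<delta>)" "\<not> int p dvd (\<alpha>*\<delta>)"
    "int p dvd (w^2 - \<alpha>*\<delta>*\<Delta>)" by blast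
  have AG: "A \<in> G" using A(1) S0G by blast
  have u\<alpha>: "\<not> int p dvd \<alpha>" using A(3) by auto
  have u\<alpha>c: "\<not> int p dvd (\<alpha>*c2)" using unit_mult[OF pr u\<alpha> c2] .
  define K where "K = w - \<alpha>*a2 - \<beta>'*c2 - \<delta>*d2"
  define e where "e = K * minv p (\<alpha>*c2)"
  obtain n where n: "\<psi> (tp n) = mob p (1,e,0,1)" using tr_any by blast
  define g where "g = compose V A (compose V (tp n) x)"
  have gG: "g \<in> G" using clos[OF AG clos[OF tpG x(1)]] g_def by simp
  define n1 where "n1 = \<alpha>*(a2 + e*c2) + \<beta>'*c2"
  define n2 where "n2 = \<alpha>*(b2 + e*d2) + \<beta>'*d2"
  define n3 where "n3 = \<delta>*c2"
  define n4 where "n4 = \<delta>*d2"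
  have Neq: "mmul (\<alpha>,\<beta>',0,\<delta>) (mmul (1,e,0,1) (a2,b2,c2,d2)) = (n1,n2,n3,n4)"
    by (simp add: n1_def n2_def n3_def n4_def)
  define D where "D = n1*n4 - n2*n3"
  have Dd: "D = \<alpha>*\<delta>*\<Delta>"
  proof -
    have "mdet (mmul (\<alpha>,\<beta>',0,\<delta>) (mmul (1,e,0,1) (a2,b2,c2,d2))) = (\<alpha>*\<delta>) * (1 * (a2*d2 - b2*c2))"
      by (simp only: mdet_mmul mdet.simps) simp
    then show ?thesis using Neq Mx by (simp add: D_def \<Delta>_def)
  qed
  have uD: "\<not> int p dvd D" using Dd unit_mult[OF pr A(3) u\<Delta>] by simp
  have uA: "\<not> int p dvd mdet (\<alpha>,\<beta>',0,\<delta>)" using A(3) by simp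
  have ue: "\<not> int p dvd mdet (1,e,0,1)" using p2 by simp
  have uX: "\<not> int p dvd mdet (a2,b2,c2,d2)" using u\<Delta> Mx \<Delta>_def by simp
  have \<psi>g: "\<psi> g = mob p (n1,n2,n3,n4)"
  proof -
    have "\<psi> g = compose {0..p} (\<psi> A) (compose {0..p} (\<psi> (tp n)) (\<psi> x))"
      using \<psi>hom[OF AG clos[OF tpG x(1)]] \<psi>hom[OF tpG x(1)] g_def by simp
    also have "\<dots> = compose {0..p} (mob p (\<alpha>,\<beta>',0,\<delta>)) (mob p (mmul (1,e,0,1) (a2,b2,c2,d2)))"
      using A(2) n Mx mob_comp[OF pr ue uX] by (simp add: \<psi>_def)
    also have "\<dots> = mob p (mmul (\<alpha>,\<beta>',0,\<delta>) (mmul (1,e,0,1) (a2,b2,c2,d2)))"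
      by (rule mob_comp[OF pr uA]) (simp only: mdet_mmul, use ue uX unit_mult[OF pr] in simp)
    finally show ?thesis using Neq by simp
  qed
  define t where "t = n1 + n4"
  have tw: "int p dvd (t - w)"
  proof -
    have "t - w = K * (\<alpha>*c2 * minv p (\<alpha>*c2) - 1)"
      by (simp add: t_def n1_def n4_def e_def K_def algebra_simps)
    then show ?thesis using dvd_mult[OF minv[OF pr u\<alpha>c], of K] by simp
  qed
  have tD: "int p dvd (t^2 - D)"
  proof -
    have "t^2 - D = (t - w) * (t + w) + (w^2 - \<alpha>*\<delta>*\<Delta>)" using Dd by (simp add: algebra_simps power2_eq_square)
    then show ?thesis using dvd_add[OF dvd_mult2[OF tw] A(4)] by simp
  qed
  have uN: "\<not> int p dvd mdet (n1,n2,n3,n4)" using uD by (simp add: D_def)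
  have cube: "mmul (mmul (n1,n2,n3,n4) (n1,n2,n3,n4)) (n1,n2,n3,n4) =
     ((t^2 - D)*n1 - t*D, (t^2 - D)*n2, (t^2 - D)*n3, (t^2 - D)*n4 - t*D)"
    using cayley3[of n1 n2 n3 n4] by (simp add: t_def D_def)
  have uN3: "\<not> int p dvd mdet (mmul (mmul (n1,n2,n3,n4) (n1,n2,n3,n4)) (n1,n2,n3,n4))"
    using uN unit_mult[OF pr] by (simp only: mdet_mmul) simp
  have "mob p (mmul (mmul (n1,n2,n3,n4) (n1,n2,n3,n4)) (n1,n2,n3,n4)) = mob p (1,0,0,1)"
    apply (rule mob_scale_cong[where l="- (t*D)", OF pr uN3])
    subgoal using p2 by simp
    subgoal using dvd_mult2[OF tD, of n1] unfolding cube by simp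
    subgoal using dvd_mult2[OF tD, of n2] unfolding cube by simp
    subgoal using dvd_mult2[OF tD, of n3] unfolding cube by simp
    subgoal using dvd_mult2[OF tD, of n4] unfolding cube by simp
    done
  then have "mob p (mmul (mmul (n1,n2,n3,n4) (n1,n2,n3,n4)) (n1,n2,n3,n4)) = (\<lambda>z\<in>{0..p}. z)"
    using mob_id[OF pr, of 1] p2 by simp
  moreover have "\<psi> (compose V g (compose V g g)) = mob p (mmul (mmul (n1,n2,n3,n4) (n1,n2,n3,n4)) (n1,n2,n3,n4))"
  proof -
    have "\<psi> (compose V g (compose V g g)) = compose {0..p} (\<psi> g) (compose {0..p} (\<psi> g) (\<psi> g))"
      using \<psi>hom[OF gG clos[OF gG gG]] \<psi>hom[OF gG gG] by simp
    also have "\<dots> = mob p (mmul (n1,n2,n3,n4) (mmul (n1,n2,n3,n4) (n1,n2,n3,n4)))"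
      using \<psi>g mob_comp[OF pr uN uN] mob_comp[OF pr uN, of "mmul (n1,n2,n3,n4) (n1,n2,n3,n4)"] uN unit_mult[OF pr]
      by (simp only: mdet_mmul) simp
    finally show ?thesis by (simp only: mmul_assoc)
  qed
  ultimately have "\<psi> (compose V g (compose V g g)) = \<psi> (\<lambda>x\<in>V. x)" using \<psi>one by simp
  then have g3: "compose V g (compose V g g) = (\<lambda>x\<in>V. x)" using \<psi>inj[OF clos[OF gG clos[OF gG gG]] oneG] by blast
  define u1 where "u1 = g v0"
  define u2 where "u2 = g u1"
  have u1V: "u1 \<in> V" using gV[OF gG v0] u1_def by simp
  have u2V: "u2 \<in> V" using gV[OF gG u1V] u2_def by simp
  have xV: "x v0 \<in> V" using gV[OF x(1) v0] .
  have tpv: "tp n v0 = v0" using tpS0[of n] by (simp add: S0_def)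
  have Av: "A v0 = v0" using A(1) by (simp add: S0_def)
  have "E (tp n v0) (tp n (x v0))" using gE[OF tpG v0 xV] x(2) by blast
  then have e1: "E v0 (tp n (x v0))" using tpv by simp
  have txV: "tp n (x v0) \<in> V" using gV[OF tpG xV] .
  have "E (A v0) (A (tp n (x v0)))" using gE[OF AG v0 txV] e1 by blast
  then have E01: "E v0 u1" using Av v0 by (simp add: u1_def g_def compose_def)
  have E12: "E u1 u2" using gE[OF gG v0 u1V] E01 by (simp add: u1_def u2_def)
  have "g u2 = v0" using fun_cong[OF g3, of v0] v0 u1V by (simp add: compose_def u1_def u2_def)
  then have "E u2 v0" using gE[OF gG u1V u2V] E12 by (simp add: u2_def)
  then have E02: "E v0 u2" using Eprops by blast
  show ?thesis unfolding has_triangle_def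
    using v0 u1V u2V E01 E12 E02 Eprops[OF E01] Eprops[OF E12] Eprops[OF E02] by blast
qed

lemma mob_in_K: assumes "prime p" "\<not> int p dvd mdet M"
  shows "mob p M \<in> carrier (PGL2 p)"
proof -
  obtain a b c d where M: "M = (a,b,c,d)" by (cases M) auto
  have "\<not> [a*d - b*c = 0] (mod int p)" using assms(2) M by (simp add: cong_0_iff)
  moreover have "moebius_perm p a b c d (mob p M)" using mob_moebius[OF assms(1)] assms(2) M by simp
  ultimately show ?thesis using mob_bij[OF assms] by (auto simp: PGL2_def perm_group_def)
qed

lemma K_char: assumes "prime p"
  shows "carrier (PGL2 p) = {mob p M | M. \<not> int p dvd mdet M}"
proof
  show "carrier (PGL2 p) \<subseteq> {mob p M | M. \<not> int p dvd mdet M}"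
  proof
    fix \<sigma> assume "\<sigma> \<in> carrier (PGL2 p)"
    then obtain a b c d where s: "\<sigma> \<in> Bij {0..p}" "\<not> [a*d - b*c = 0] (mod int p)" "moebius_perm p a b c d \<sigma>"
      by (auto simp: PGL2_def perm_group_def)
    have u: "\<not> int p dvd (a*d - b*c)" using s(2) by (simp add: cong_0_iff)
    have "\<sigma> = mob p (a,b,c,d)" using moebius_mob[OF assms u s(3,1)] .
    then show "\<sigma> \<in> {mob p M | M. \<not> int p dvd mdet M}" using u by fastforce
  qed
  show "{mob p M | M. \<not> int p dvd mdet M} \<subseteq> carrier (PGL2 p)" using mob_in_K[OF assms] by blast
qed

lemma PSL_char: assumes "prime p" "\<sigma> \<in> carrier (PSL2 p)"
  shows "\<exists>M. int p dvd (mdet M - 1) \<and> \<not> int p dvd mdet M \<and> \<sigma> = mob p M"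
proof -
  obtain a b c d where s: "\<sigma> \<in> Bij {0..p}" "[a*d - b*c = 1] (mod int p)" "moebius_perm p a b c d \<sigma>"
    using assms(2) by (auto simp: PSL2_def perm_group_def)
  have d1: "int p dvd (a*d - b*c - 1)" using s(2) by (simp add: cong_iff_dvd_diff)
  have u: "\<not> int p dvd (a*d - b*c)"
  proof
    assume "int p dvd (a*d - b*c)"
    then have "int p dvd 1" using dvd_diff[OF _ d1] by fastforce
    then show False using assms(1) by (simp add: prime_gt_1_nat)
  qed
  have "\<sigma> = mob p (a,b,c,d)" using moebius_mob[OF assms(1) u s(3,1)] .
  then show ?thesis using u d1 by fastforce
qed

lemma K_sub: assumes pr: "prime p" shows "subgroup (carrier (PGL2 p)) (BijGroup {0..p})"
proof (rule group.subgroupI[OF group_BijGroup])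
  show "carrier (PGL2 p) \<subseteq> carrier (BijGroup {0..p})" by (auto simp: PGL2_def perm_group_def BijGroup_def)
  show "carrier (PGL2 p) \<noteq> {}" using mob_in_K[OF pr, of "(1,0,0,1)"] prime_gt_1_nat[OF pr] by auto
next
  fix \<sigma> assume "\<sigma> \<in> carrier (PGL2 p)"
  then obtain M where M: "\<not> int p dvd mdet M" "\<sigma> = mob p M" using K_char[OF pr] by blast
  obtain a b c d where Md: "M = (a,b,c,d)" by (cases M) auto
  define A where "A = (d,-b,-c,a)"
  have uA: "\<not> int p dvd mdet A" using M(1) Md by (simp add: A_def algebra_simps)
  have "compose {0..p} (mob p A) (mob p M) = mob p (mmul A M)" using mob_comp[OF pr uA M(1)] .
  also have "\<dots> = mob p (mdet M, 0, 0, mdet M)" using Md by (simp add: A_def algebra_simps)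
  also have "\<dots> = (\<lambda>z\<in>{0..p}. z)" using mob_id[OF pr M(1)] .
  finally have e: "compose {0..p} (mob p A) (mob p M) = (\<lambda>z\<in>{0..p}. z)" .
  have "inv\<^bsub>BijGroup {0..p}\<^esub> \<sigma> = mob p A"
    apply (rule group.inv_equality[OF group_BijGroup])
    using e M mob_bij[OF pr M(1)] mob_bij[OF pr uA] by (simp_all add: bij_mult BijGroup_def)
  then show "inv\<^bsub>BijGroup {0..p}\<^esub> \<sigma> \<in> carrier (PGL2 p)" using mob_in_K[OF pr uA] by simp
next
  fix \<sigma> \<tau> assume "\<sigma> \<in> carrier (PGL2 p)" "\<tau> \<in> carrier (PGL2 p)"
  then obtain M N where M: "\<not> int p dvd mdet M" "\<sigma> = mob p M" and N: "\<not> int p dvd mdet N" "\<tau> = mob p N"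
    using K_char[OF pr] by blast
  have "\<sigma> \<otimes>\<^bsub>BijGroup {0..p}\<^esub> \<tau> = mob p (mmul M N)"
    using M N mob_comp[OF pr M(1) N(1)] mob_bij[OF pr M(1)] mob_bij[OF pr N(1)] by (simp add: bij_mult)
  then show "\<sigma> \<otimes>\<^bsub>BijGroup {0..p}\<^esub> \<tau> \<in> carrier (PGL2 p)"
    using mob_in_K[OF pr] M N unit_mult[OF pr] by (simp add: mdet_mmul)
qed

lemma K_card: assumes pr: "prime p" and p2: "2 < p"
  shows "card (carrier (PGL2 p)) = p * (p^2 - 1)"
proof -
  define K where "K = carrier (PGL2 p)"
  have sub: "subgroup K (BijGroup {0..p})" using K_sub[OF pr] K_def by simp
  have pin: "p \<in> {0..p}" by simp
  have orb: "{g p | g. g \<in> K} = {0..p}"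
  proof
    show "{g p | g. g \<in> K} \<subseteq> {0..p}" using sub_Bij[OF sub] Bij_app[OF _ pin] by blast
    show "{0..p} \<subseteq> {g p | g. g \<in> K}"
    proof
      fix y assume y: "y \<in> {0..p}"
      show "y \<in> {g p | g. g \<in> K}"
      proof (cases "y = p")
        case True
        have "mob p (1,0,0,1) \<in> K" using mob_in_K[OF pr, of "(1,0,0,1)"] p2 K_def by simp
        moreover have "mob p (1,0,0,1) p = p" using mob_fix_inf[OF pr] by simp
        ultimately have "y = mob p (1,0,0,1) p \<and> mob p (1,0,0,1) \<in> K" using True by simp
        then show ?thesis by blast
      next
        case False
        have "mob p (int y,-1,1,0) \<in> K" using mob_in_K[OF pr, of "(int y,-1,1,0)"] p2 K_def by simp
        moreover have "mob p (int y,-1,1,0) p = y" using False y minv1[OF pr] p2 by (simp add: mob_def pt_def)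
        ultimately have "y = mob p (int y,-1,1,0) p \<and> mob p (int y,-1,1,0) \<in> K" by simp
        then show ?thesis by blast
      qed
    qed
  qed
  define f where "f ab = mob p (int (fst ab), int (snd ab), 0, 1)" for ab
  have stab: "{g \<in> K. g p = p} = f ` ({1..<p} \<times> {..<p})"
  proof
    show "{g \<in> K. g p = p} \<subseteq> f ` ({1..<p} \<times> {..<p})"
    proof
      fix \<sigma> assume s: "\<sigma> \<in> {g \<in> K. g p = p}"
      then obtain M where M: "\<not> int p dvd mdet M" "\<sigma> = mob p M" using K_char[OF pr] K_def by blast
      obtain a b c d where Md: "M = (a,b,c,d)" by (cases M) auto
      have c: "int p dvd c" using s M Md mob_fix_inf[OF pr] by simp
      have uad: "\<not> int p dvd (a*d)"
      proof
        assume "int p dvd (a*d)"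
        then have "int p dvd (a*d - b*c)" using c by simp
        then show False using M(1) Md by simp
      qed
      have ud: "\<not> int p dvd d" and ua: "\<not> int p dvd a" using uad by auto
      define a' where "a' = (a * minv p d) mod int p"
      define b' where "b' = (b * minv p d) mod int p"
      have m: "int p dvd (d * minv p d - 1)" using minv[OF pr ud] .
      have a'0: "0 \<le> a'" "a' < int p" "0 \<le> b'" "b' < int p" using pr by (simp_all add: a'_def b'_def prime_gt_0_nat)
      have ea: "int p dvd (a' - a * minv p d)" by (simp add: a'_def mod_eq_dvd_iff[symmetric])
      have eb: "int p dvd (b' - b * minv p d)" by (simp add: b'_def mod_eq_dvd_iff[symmetric])
      have da: "int p dvd (a - d * a')"
      proof -
        have "a - d * a' = - (d * (a' - a * minv p d)) - a * (d * minv p d - 1)" by (simp add: algebra_simps)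
        then show ?thesis using dvd_diff[OF dvd_mult[OF ea, of "-d"] dvd_mult[OF m, of a]] by simp
      qed
      have db: "int p dvd (b - d * b')"
      proof -
        have "b - d * b' = - (d * (b' - b * minv p d)) - b * (d * minv p d - 1)" by (simp add: algebra_simps)
        then show ?thesis using dvd_diff[OF dvd_mult[OF eb, of "-d"] dvd_mult[OF m, of b]] by simp
      qed
      have ua': "\<not> int p dvd a'"
      proof
        assume "int p dvd a'"
        then have "int p dvd (d * a')" by simp
        then have "int p dvd a" using da by (metis dvd_diff_commute dvd_add_right_iff diff_add_cancel)
        then show False using ua by simp
      qed
      have "mob p (a,b,c,d) = mob p (a',b',0,1)"
        apply (rule mob_scale_cong[where l=d, OF pr])
        using M(1) Md ua' c da db by (simp_all add: dvd_diff_commute[of _ d])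
      moreover have "a' \<noteq> 0" using ua' by auto
      ultimately have "\<sigma> = f (nat a', nat b')" using M Md a'0 by (simp add: f_def)
      moreover have "(nat a', nat b') \<in> {1..<p} \<times> {..<p}" using a'0 \<open>a' \<noteq> 0\<close> by auto
      ultimately show "\<sigma> \<in> f ` ({1..<p} \<times> {..<p})" by blast
    qed
    show "f ` ({1..<p} \<times> {..<p}) \<subseteq> {g \<in> K. g p = p}"
    proof
      fix \<sigma> assume "\<sigma> \<in> f ` ({1..<p} \<times> {..<p})"
      then obtain a b where ab: "a \<in> {1..<p}" "b < p" "\<sigma> = mob p (int a, int b, 0, 1)" by (auto simp: f_def)
      have "\<not> int p dvd int a" using ab(1) by (auto simp: zdvd_not_zless)
      then have "\<sigma> \<in> K" using mob_in_K[OF pr, of "(int a, int b, 0, 1)"] ab K_def by simp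
      moreover have "\<sigma> p = p" using ab mob_fix_inf[OF pr] by simp
      ultimately show "\<sigma> \<in> {g \<in> K. g p = p}" by simp
    qed
  qed
  have injf: "inj_on f ({1..<p} \<times> {..<p})"
  proof (rule inj_onI)
    fix x y assume x: "x \<in> {1..<p} \<times> {..<p}" and y: "y \<in> {1..<p} \<times> {..<p}" and e: "f x = f y"
    obtain a b where xab: "x = (a,b)" by (cases x) auto
    obtain a' b' where yab: "y = (a',b')" by (cases y) auto
    have r: "a < p" "b < p" "a' < p" "b' < p" using x y xab yab by auto
    have p1: "1 < p" using p2 by simp
    have "f x 0 = b" using r p1 xab minv1[OF pr] by (simp add: f_def mob_def pt_def hcoord_def)
    moreover have "f y 0 = b'" using r p1 yab minv1[OF pr] by (simp add: f_def mob_def pt_def hcoord_def)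
    ultimately have bb: "b = b'" using e by simp
    have "f x 1 = nat ((int a + int b) mod int p)" using r p1 xab minv1[OF pr] by (simp add: f_def mob_def pt_def hcoord_def)
    moreover have "f y 1 = nat ((int a' + int b') mod int p)" using r p1 yab minv1[OF pr] by (simp add: f_def mob_def pt_def hcoord_def)
    ultimately have "(int a + int b) mod int p = (int a' + int b) mod int p" using e bb pr
      by (metis nat_int_comparison(1) pos_mod_sign of_nat_0_less_iff prime_gt_0_nat int_nat_eq)
    then have "int p dvd ((int a - int a') * 1)" by (simp add: mod_eq_dvd_iff)
    then have "a = a'" using small_eq[OF pr r(1) r(3), of 1] p2 by simp
    then show "x = y" using xab yab bb by simp
  qed
  have "card {g \<in> K. g p = p} = (p - 1) * p"
    using stab card_image[OF injf] by simp
  moreover have "card {g p | g. g \<in> K} * card {g \<in> K. g p = p} = card K" using perm_orbit_stab[OF sub pin] .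
  ultimately have "card K = (p + 1) * ((p - 1) * p)" using orb by simp
  also have "\<dots> = p * (p^2 - 1)" using p2 by (simp add: power2_eq_square algebra_simps)
  finally show ?thesis using K_def by simp
qed

lemma vtrans: assumes sg: "simple_graph V E" and val: "valency V E p" and pr: "prime p"
  and at: "arc_transitive V E G" and u: "u \<in> V" and v: "v \<in> V"
  shows "\<exists>g\<in>G. g u = v"
proof -
  have nbr: "\<exists>w. E x w" if xV: "x \<in> V" for x
  proof -
    have "card {w \<in> V. E x w} = p" using val xV by (simp add: valency_def)
    then have "{w \<in> V. E x w} \<noteq> {}" using pr by (metis card.empty not_prime_0)
    then show ?thesis by blast
  qed
  obtain u' where u': "E u u'" using nbr[OF u] by blast
  obtain v' where v': "E v v'" using nbr[OF v] by blast
  have "(u,u') \<in> arcs V E" "(v,v') \<in> arcs V E" using u' v' sg by (auto simp: arcs_def simple_graph_def)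
  then have "\<exists>g\<in>G. g (fst (u,u')) = fst (v,v') \<and> g (snd (u,u')) = snd (v,v')"
    using at unfolding arc_transitive_def by blast
  then show ?thesis by auto
qed

lemma iso_props: assumes "\<phi> \<in> iso (perm_group V G) (perm_group {0..p} K)" "subgroup G (BijGroup V)"
  "K \<subseteq> Bij {0..p}"
  shows "(\<forall>g\<in>G. \<forall>h\<in>G. \<phi> (compose V g h) = compose {0..p} (\<phi> g) (\<phi> h)) \<and> inj_on \<phi> G \<and> bij_betw \<phi> G K"
proof -
  have hom: "\<phi> \<in> hom (perm_group V G) (perm_group {0..p} K)" and bij: "bij_betw \<phi> G K"
    using assms(1) by (auto simp: iso_def)
  have "\<phi> (compose V g h) = compose {0..p} (\<phi> g) (\<phi> h)" if gh: "g \<in> G" "h \<in> G" for g h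
  proof -
    have "\<phi> (g \<otimes>\<^bsub>perm_group V G\<^esub> h) = \<phi> g \<otimes>\<^bsub>perm_group {0..p} K\<^esub> \<phi> h"
      using hom gh by (simp add: hom_def)
    moreover have "\<phi> g \<in> K" "\<phi> h \<in> K" using bij gh by (auto simp: bij_betw_def)
    ultimately show ?thesis using pg_mult[OF assms(2) gh] assms(3)
      by (auto simp: perm_group_def BijGroup_def)
  qed
  then show ?thesis using bij by (simp add: bij_betw_def)
qed

theorem lemma3p3:
  fixes V :: "'v set" and E :: "'v \<Rightarrow> 'v \<Rightarrow> bool" and G :: "('v \<Rightarrow> 'v) set" and p :: nat
  assumes "prime p"
    and "simple_graph V E"
    and "graph_connected V E"
    and "valency V E p"
    and "subgroup G (BijGroup V)" and "G \<subseteq> graph_aut V E"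
    and "arc_transitive V E G"
    and "quasiprimitive V G \<or> biquasiprimitive V G"
    and "(is_complete_graph V E 12 \<and> perm_group V G \<cong> M11 \<and> p = 11)
         \<or> (\<exists>s. card V = (p\<^sup>2 - 1) div (2 * s)
              \<and> (perm_group V G \<cong> PSL2 p \<or> perm_group V G \<cong> PGL2 p)
              \<and> mersenne_prime p
              \<and> (\<Prod>q\<in>prime_factors ((p - 1) div 2). q) dvd s
              \<and> s dvd (p - 1) div 2 \<and> s \<noteq> (p - 1) div 2)"
  shows "has_triangle V E"
  using assms(9)
proof
  assume a: "is_complete_graph V E 12 \<and> perm_group V G \<cong> M11 \<and> p = 11"
  then have cV: "card V = 12" and cE: "\<forall>x\<in>V. \<forall>y\<in>V. x \<noteq> y \<longrightarrow> E x y" by (auto simp: is_complete_graph_def)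
  have fin: "finite V" using cV card_gt_0_iff[of V] by simp
  have "V \<noteq> {}" using cV card_gt_0_iff[of V] by simp
  then obtain x where x: "x \<in> V" by blast
  have "card (V - {x}) = 11" using cV x fin by simp
  then have "V - {x} \<noteq> {}" using card_gt_0_iff[of "V - {x}"] by simp
  then obtain y where y: "y \<in> V - {x}" by blast
  have "card (V - {x} - {y}) = 10" using \<open>card (V - {x}) = 11\<close> y fin by simp
  then have "V - {x} - {y} \<noteq> {}" using card_gt_0_iff[of "V - {x} - {y}"] by simp
  then obtain z where z: "z \<in> V - {x} - {y}" by blast
  show ?thesis unfolding has_triangle_def using x y z cE by blast
next
  assume "\<exists>s. card V = (p\<^sup>2 - 1) div (2 * s)
              \<and> (perm_group V G \<cong> PSL2 p \<or> perm_group V G \<cong> PGL2 p)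
              \<and> mersenne_prime p
              \<and> (\<Prod>q\<in>prime_factors ((p - 1) div 2). q) dvd s
              \<and> s dvd (p - 1) div 2 \<and> s \<noteq> (p - 1) div 2"
  then obtain s where s: "card V = (p\<^sup>2 - 1) div (2 * s)" "perm_group V G \<cong> PSL2 p \<or> perm_group V G \<cong> PGL2 p"
    "mersenne_prime p" "s dvd (p - 1) div 2" "s \<noteq> (p - 1) div 2" by blast
  have pr: "prime p" by (rule assms(1))
  obtain k where k: "p = 2^k - 1" using s(3) by (auto simp: mersenne_prime_def)
  have k2: "k \<ge> 2"
  proof (rule ccontr)
    assume "\<not> k \<ge> 2"
    then have "k = 0 \<or> k = 1" by auto
    then have "p = 0 \<or> p = 1" using k by auto
    then show False using pr by auto
  qed
  obtain j where j: "k = j + 2" using k2 by (intro that[of "k - 2"]) simp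
  define m where "m = (2::nat)^j"
  have pm: "p = 4 * m - 1" using k j by (simp add: m_def power_add)
  have m1: "m \<ge> 1" by (simp add: m_def)
  have pm3: "p = 4 * (m - 1) + 3" using pm m1 by linarith
  have p4: "p mod 4 = 3" using pm3 by simp
  have p2: "2 < p" using pm3 by simp
  define h where "h = (p - 1) div 2"
  have ph: "p - 1 = 2 * h" using p4 h_def by presburger
  have h0: "h > 0" using p2 ph by simp
  have s0: "s > 0" using s(4) h0 h_def by (cases "s = 0") auto
  have sh: "s \<le> h" using s(4) h0 h_def by (simp add: dvd_imp_le)
  have "p\<^sup>2 - 1 = (p - 1) * (p + 1)" using p2 by (simp add: power2_eq_square algebra_simps)
  then have pp: "p - 1 dvd p\<^sup>2 - 1" by simp
  have "2 * s dvd 2 * h" using s(4) h_def by (simp add: mult_dvd_mono)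
  then have "2 * s dvd p - 1" using ph by simp
  then have dv: "2 * s dvd p\<^sup>2 - 1" using pp by (rule dvd_trans)
  have cV2: "card V * (2 * s) = p\<^sup>2 - 1" using s(1) dv by simp
  have "1 * 1 < p * p" using p2 by (intro mult_strict_mono) simp_all
  then have "p\<^sup>2 - 1 > 0" by (simp add: power2_eq_square)
  then have Vne: "V \<noteq> {}" using cV2 by auto
  have sub: "subgroup G (BijGroup V)" by (rule assms(5))
  obtain \<phi> where iso: "\<phi> \<in> iso (perm_group V G) (PSL2 p) \<or> \<phi> \<in> iso (perm_group V G) (PGL2 p)"
    using s(2) by (auto simp: is_iso_def)
  show ?thesis
    using iso
  proof
    assume i: "\<phi> \<in> iso (perm_group V G) (PSL2 p)"
    have props: "(\<forall>g\<in>G. \<forall>h\<in>G. \<phi> (compose V g h) = compose {0..p} (\<phi> g) (\<phi> h)) \<and> inj_on \<phi> G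
      \<and> bij_betw \<phi> G (carrier (PSL2 p))"
      apply (rule iso_props[OF _ sub])
      using i apply (simp add: PSL2_def)
      unfolding PSL2_def perm_group_def by (simp add: subset_iff)
    have phm: "\<forall>g\<in>G. \<forall>h\<in>G. \<phi> (compose V g h) = compose {0..p} (\<phi> g) (\<phi> h)" using props by blast
    have pinj: "inj_on \<phi> G" using props by blast
    have inK: "\<And>g. g \<in> G \<Longrightarrow> \<phi> g \<in> carrier (PSL2 p)" using props by (auto simp: bij_betw_def)
    have pm: "\<forall>g\<in>G. \<exists>M. \<not> int p dvd mdet M \<and> \<phi> g = mob p M" using PSL_char[OF pr] inK by blast
    have cs: "\<forall>g\<in>G. \<exists>M. int p dvd (mdet M - 1) \<and> \<phi> g = mob p M" using PSL_char[OF pr] inK by blast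
    show ?thesis
      by (rule core[OF pr p2 assms(2,3,4) Vne sub assms(6,7) phm pinj pm disjI1[OF cs]])
  next
    assume i: "\<phi> \<in> iso (perm_group V G) (PGL2 p)"
    have props: "(\<forall>g\<in>G. \<forall>h\<in>G. \<phi> (compose V g h) = compose {0..p} (\<phi> g) (\<phi> h)) \<and> inj_on \<phi> G
      \<and> bij_betw \<phi> G (carrier (PGL2 p))"
      apply (rule iso_props[OF _ sub])
      using i apply (simp add: PGL2_def)
      unfolding PGL2_def perm_group_def by (simp add: subset_iff)
    have phm: "\<forall>g\<in>G. \<forall>h\<in>G. \<phi> (compose V g h) = compose {0..p} (\<phi> g) (\<phi> h)" using props by blast
    have pinj: "inj_on \<phi> G" using props by blast
    have bj: "bij_betw \<phi> G (carrier (PGL2 p))" using props by blast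
    have inK: "\<And>g. g \<in> G \<Longrightarrow> \<phi> g \<in> carrier (PGL2 p)" using bj by (auto simp: bij_betw_def)
    have pm: "\<forall>g\<in>G. \<exists>M. \<not> int p dvd mdet M \<and> \<phi> g = mob p M" using K_char[OF pr] inK by blast
    have "card G = card (carrier (PGL2 p))" using bj by (rule bij_betw_same_card)
    then have cG: "card G = p * (p\<^sup>2 - 1)" using K_card[OF pr p2] by simp
    have st: "\<forall>v\<in>V. even (card {g\<in>G. g v = v}) \<and> card {g\<in>G. g v = v} < p^2"
    proof
      fix v assume vV: "v \<in> V"
      have orb: "{g v | g. g \<in> G} = V"
      proof
        show "{g v | g. g \<in> G} \<subseteq> V"
        proof
          fix y assume "y \<in> {g v | g. g \<in> G}"
          then obtain g where "g \<in> G" "y = g v" by blast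
          then show "y \<in> V" using Bij_app[OF sub_Bij[OF sub] vV] by simp
        qed
        show "V \<subseteq> {g v | g. g \<in> G}"
        proof
          fix y assume yV: "y \<in> V"
          obtain g where "g \<in> G" "g v = y" using vtrans[OF assms(2,4) pr assms(7) vV yV] by blast
          then show "y \<in> {g v | g. g \<in> G}" by blast
        qed
      qed
      have "card V * card {g\<in>G. g v = v} = card G" using perm_orbit_stab[OF sub vV] orb by simp
      also have "\<dots> = card V * (p * (2 * s))" using cG cV2[symmetric] by simp
      finally have e: "card V * card {g\<in>G. g v = v} = card V * (p * (2 * s))" .
      have "card V > 0" using cV2 \<open>p\<^sup>2 - 1 > 0\<close> by (cases "card V = 0") simp_all
      then have cs: "card {g\<in>G. g v = v} = p * (2 * s)" using e by simp
      have "2 * s < p" using sh ph p2 by simp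
      then have "p * (2 * s) < p * p" using p2 by (intro mult_strict_left_mono) simp_all
      then show "even (card {g\<in>G. g v = v}) \<and> card {g\<in>G. g v = v} < p^2" using cs by (simp add: power2_eq_square)
    qed
    show ?thesis
      by (rule core[OF pr p2 assms(2,3,4) Vne sub assms(6,7) phm pinj pm disjI2[OF conjI[OF p4 st]]])
  qed
qed

end
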